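(* Assume that $\varphi$ satisfies Conditions (C1), (C2), (C3), (C4) described in the context, with constants $1<p_-\le p_+$, $\beta\ge 1$. For $u\in L_{1,loc}(\Omega)$ let $G(u):=F(u)+\int_\Omega|u(x)|^{p_-}dx$ and $g(u):=\inf\{\lambda>0: G(u/\lambda)\le1\}$. Then $g$ is a norm on $\mathcal L(\Omega)$, and for all $u\in\mathcal L(\Omega)$ $$\tfrac12 f(u)\le g(u)\le \beta^{1/p_-}f(u).$$
   Context: Let $d\ge 1$ and let $\Omega\subseteq\mathbb R^d$ be a domain (open set, bounded or unbounded, possibly $\Omega=\mathbb R^d$). Functions are complex-valued. Let $a\in L_1(\mathbb R^d)$, $a\ge 0$, and suppose there is a non-empty ball $B_0$ centered at $0$ with $a(z)\ge c_0>0$ for a.e. $z\in B_0$. If $\Omega$ is not connected and $\Omega_1,\Omega_2,\dots$ are its connected components, assume $\operatorname{dist}(\Omega_i,\Omega_{i+1})<\operatorname{diam}B_0$ for all $i$. A real function $r$ on $[0,\infty)$ is almost increasing (resp. almost decreasing) with constant $\beta\ge1$ if $r(s)\le\beta r(t)$ (resp. $\beta r(s)\ge r(t)$) for all $0\le s\le t$. Let $\varphi:[0,\infty)\times\Omega\times\Omega\to[0,\infty)$. Conditions: (C1) for each $u\in L_{1,loc}(\Omega)$ the function $(x,y)\mapsto\varphi(|u(x)-u(y)|,x,y)$ is measurable on $\Omega\times\Omega$; (C2) for every $\varepsilon>0$ there is $\delta\in(0,1)$ such that $\varphi(\frac{s+t}{2},x,y)\le(1-\delta)\frac{\varphi(s,x,y)+\varphi(t,x,y)}{2}$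 for a.e. $(x,y)$ and all $s,t>0$ with $|s-t|\ge\varepsilon\max\{s,t\}$; (C3) there are constants $1<p_-\le p_+$ and $\beta\ge1$ such that for a.e. $(x,y)$ the function $t\mapsto\varphi(t,x,y)/t^{p_-}$ is almost increasing with constant $\beta$ and $t\mapsto\varphi(t,x,y)/t^{p_+}$ is almost decreasing with constant $\beta$; (C4) for a.e. $(x,y)$: $c_1^{-1}\le\varphi(1,x,y)\le c_1$ with a constant $c_1>0$, $\varphi(0,x,y)=0$, and $\varphi(t,x,y)>0$ for $t>0$. Define for $u\in L_{1,loc}(\Omega)$: $F(u)=\int_{\Omega\times\Omega}\varphi(|u(x)-u(y)|,x,y)\,a(x-y)\,dx\,dy\in[0,+\infty]$, $|u|_{p,\Omega}=\inf\{\lambda>0: F(u/\lambda)\le1\}$, $f(u)=|u|_{p,\Omega}+\|u\|_{L_{p_-}(\Omega)}$, and $\mathcal L(\Omega)=\{u\in L_{p_-,loc}(\Omega): f(u)<+\infty\}$. *)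

theory Defs
  imports "HOL-Analysis.Analysis"
begin

text \<open>Functions on \<Omega> \<subseteq> R^d are modelled as functions 'a \<Rightarrow> complex with 'a a euclidean space.\<close>

definition loc_integrable :: "'a::euclidean_space set \<Rightarrow> ('a \<Rightarrow> complex) \<Rightarrow> bool" where
  "loc_integrable \<Omega> u \<longleftrightarrow> u \<in> borel_measurable (lebesgue_on \<Omega>) \<and>
     (\<forall>K. compact K \<and> K \<subseteq> \<Omega> \<longrightarrow> integrable (lebesgue_on K) u)"

definition loc_Lp :: "real \<Rightarrow> 'a::euclidean_space set \<Rightarrow> ('a \<Rightarrow> complex) \<Rightarrow> bool" where
  "loc_Lp p \<Omega> u \<longleftrightarrow> u \<in> borel_measurable (lebesgue_on \<Omega>) \<and>
     (\<forall>K. compact K \<and> K \<subseteq> \<Omega> \<longrightarrow> (\<integral>\<^sup>+ x. ennreal (cmod (u x) powr p) \<partial>lebesgue_on K) < \<infinity>)"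

definition almost_incr_on :: "real set \<Rightarrow> real \<Rightarrow> (real \<Rightarrow> real) \<Rightarrow> bool" where
  "almost_incr_on S \<beta> r \<longleftrightarrow> (\<forall>s\<in>S. \<forall>t\<in>S. s \<le> t \<longrightarrow> r s \<le> \<beta> * r t)"

definition almost_decr_on :: "real set \<Rightarrow> real \<Rightarrow> (real \<Rightarrow> real) \<Rightarrow> bool" where
  "almost_decr_on S \<beta> r \<longleftrightarrow> (\<forall>s\<in>S. \<forall>t\<in>S. s \<le> t \<longrightarrow> \<beta> * r s \<ge> r t)"

definition Ffun :: "'a::euclidean_space set \<Rightarrow> ('a \<Rightarrow> real) \<Rightarrow> (real \<Rightarrow> 'a \<Rightarrow> 'a \<Rightarrow> real)
    \<Rightarrow> ('a \<Rightarrow> complex) \<Rightarrow> ennreal" where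
  "Ffun \<Omega> a \<phi> u = (\<integral>\<^sup>+ z. ennreal (\<phi> (cmod (u (fst z) - u (snd z))) (fst z) (snd z) * a (fst z - snd z))
      \<partial>lebesgue_on (\<Omega> \<times> \<Omega>))"

text \<open>Luxemburg-type gauge: inf {l > 0. H(u/l) \<le> 1} (= \<infinity> if the set is empty).\<close>
definition gauge :: "(('a \<Rightarrow> complex) \<Rightarrow> ennreal) \<Rightarrow> ('a \<Rightarrow> complex) \<Rightarrow> ennreal" where
  "gauge H u = Inf {ennreal l | l. l > 0 \<and> H (\<lambda>x. u x / complex_of_real l) \<le> 1}"

definition modp :: "real \<Rightarrow> 'a::euclidean_space set \<Rightarrow> ('a \<Rightarrow> complex) \<Rightarrow> ennreal" where
  "modp p \<Omega> u = (\<integral>\<^sup>+ x. ennreal (cmod (u x) powr p) \<partial>lebesgue_on \<Omega>)"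

definition Lp_norm :: "real \<Rightarrow> 'a::euclidean_space set \<Rightarrow> ('a \<Rightarrow> complex) \<Rightarrow> ennreal" where
  "Lp_norm p \<Omega> u = (if modp p \<Omega> u = \<infinity> then \<infinity> else ennreal (enn2real (modp p \<Omega> u) powr (1 / p)))"

definition seminorm_p :: "'a::euclidean_space set \<Rightarrow> ('a \<Rightarrow> real) \<Rightarrow> (real \<Rightarrow> 'a \<Rightarrow> 'a \<Rightarrow> real)
    \<Rightarrow> ('a \<Rightarrow> complex) \<Rightarrow> ennreal" where
  "seminorm_p \<Omega> a \<phi> u = gauge (Ffun \<Omega> a \<phi>) u"

definition fnorm :: "real \<Rightarrow> 'a::euclidean_space set \<Rightarrow> ('a \<Rightarrow> real) \<Rightarrow> (real \<Rightarrow> 'a \<Rightarrow> 'a \<Rightarrow> real)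
    \<Rightarrow> ('a \<Rightarrow> complex) \<Rightarrow> ennreal" where
  "fnorm pm \<Omega> a \<phi> u = seminorm_p \<Omega> a \<phi> u + Lp_norm pm \<Omega> u"

definition Gfun :: "real \<Rightarrow> 'a::euclidean_space set \<Rightarrow> ('a \<Rightarrow> real) \<Rightarrow> (real \<Rightarrow> 'a \<Rightarrow> 'a \<Rightarrow> real)
    \<Rightarrow> ('a \<Rightarrow> complex) \<Rightarrow> ennreal" where
  "Gfun pm \<Omega> a \<phi> u = Ffun \<Omega> a \<phi> u + modp pm \<Omega> u"

definition gnorm :: "real \<Rightarrow> 'a::euclidean_space set \<Rightarrow> ('a \<Rightarrow> real) \<Rightarrow> (real \<Rightarrow> 'a \<Rightarrow> 'a \<Rightarrow> real)
    \<Rightarrow> ('a \<Rightarrow> complex) \<Rightarrow> ennreal" where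
  "gnorm pm \<Omega> a \<phi> u = gauge (Gfun pm \<Omega> a \<phi>) u"

definition Lspace :: "real \<Rightarrow> 'a::euclidean_space set \<Rightarrow> ('a \<Rightarrow> real) \<Rightarrow> (real \<Rightarrow> 'a \<Rightarrow> 'a \<Rightarrow> real)
    \<Rightarrow> ('a \<Rightarrow> complex) set" where
  "Lspace pm \<Omega> a \<phi> = {u. loc_Lp pm \<Omega> u \<and> fnorm pm \<Omega> a \<phi> u < \<infinity>}"

end

theory Submission
  imports Defs
begin


lemma dyad_step:
  fixes f :: "real \<Rightarrow> real"
  assumes mid: "\<And>s t. 0<s \<Longrightarrow> 0<t \<Longrightarrow> f ((s+t)/2) \<le> (f s + f t)/2"
    and x: "0 < x" and xh: "0 < x + h"
  shows "f (x + h/2^n) \<le> f x + (f (x+h) - f x)/2^n"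
proof (induction n)
  case 0
  then show ?case by simp
next
  case (Suc n)
  have pos: "0 < x + h/2^n"
  proof (cases "h \<ge> 0")
    case True then show ?thesis using x by (simp add: add_pos_nonneg)
  next
    case False
    have "h \<le> h/2^n" using False by (simp add: divide_le_eq_1 mult_le_cancel_left_neg field_simps)
    then show ?thesis using xh by linarith
  qed
  have eq: "x + h/2^(Suc n) = (x + (x + h/2^n))/2" by (simp add: field_simps)
  have "f (x + h/2^(Suc n)) \<le> (f x + f (x + h/2^n))/2"
    unfolding eq by (rule mid[OF x pos])
  also have "\<dots> \<le> (f x + (f x + (f (x+h) - f x)/2^n))/2" using Suc.IH by (intro divide_right_mono add_left_mono) auto
  also have "\<dots> = f x + (f (x+h) - f x)/2^(Suc n)" by (simp add: field_simps)
  finally show ?case .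
qed


lemma midconv_isCont:
  fixes f :: "real \<Rightarrow> real"
  assumes mid: "\<And>s t. 0<s \<Longrightarrow> 0<t \<Longrightarrow> f ((s+t)/2) \<le> (f s + f t)/2"
    and bnd: "\<And>R. 0<R \<Longrightarrow> \<exists>M. \<forall>t. 0<t \<and> t\<le>R \<longrightarrow> f t \<le> M"
    and x: "0 < x"
  shows "isCont f x"
proof -
  obtain M where M: "\<And>t. 0<t \<Longrightarrow> t \<le> 2*x \<Longrightarrow> f t \<le> M"
    using bnd[of "2*x"] x by auto
  have Mx: "f x \<le> M" using M x by simp
  define C where "C = M - f x + 1"
  have C: "C > 0" using Mx by (simp add: C_def)
  show ?thesis unfolding isCont_def LIM_eq
  proof (intro allI impI)
    fix r :: real assume r: "r > 0"
    obtain n :: nat where n: "C / r < 2^n" using real_arch_pow[of 2 "C/r"] by auto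
    have Cn: "C / 2^n < r" using n r by (simp add: field_simps)
    show "\<exists>s>0. \<forall>y. y \<noteq> x \<and> norm (y - x) < s \<longrightarrow> norm (f y - f x) < r"
    proof (intro exI[of _ "(x/2)/2^n"] conjI allI impI)
      show "0 < x / 2 / 2 ^ n" using x by simp
      fix y assume y: "y \<noteq> x \<and> norm (y - x) < x / 2 / 2 ^ n"
      define h where "h = 2^n * (y - x)"
      have "\<bar>y - x\<bar> < x / 2 / 2 ^ n" using y by simp
      hence "2^n * \<bar>y - x\<bar> < x/2" by (simp add: pos_less_divide_eq mult.commute)
      hence hb: "\<bar>h\<bar> < x/2" by (simp add: h_def abs_mult)
      have y1: "y = x + h/2^n" by (simp add: h_def)
      have y2: "2*x - y = x + (-h)/2^n" by (simp add: h_def)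
      define D where "D = (M - f x)/2^n"
      have up1: "f y \<le> f x + D"
      proof -
        have "f y \<le> f x + (f (x+h) - f x)/2^n" unfolding y1 by (rule dyad_step[OF mid x]) (use hb in auto)
        moreover have "f (x+h) \<le> M" using M hb by auto
        ultimately show ?thesis unfolding D_def by (smt (verit, ccfv_SIG) divide_right_mono zero_le_power)
      qed
      have up2: "f (2*x - y) \<le> f x + D"
      proof -
        have "f (2*x-y) \<le> f x + (f (x+(-h)) - f x)/2^n" unfolding y2 by (rule dyad_step[OF mid x]) (use hb in auto)
        moreover have "f (x+(-h)) \<le> M" using M hb by auto
        ultimately show ?thesis unfolding D_def by (smt (verit, ccfv_SIG) divide_right_mono zero_le_power)
      qed
      have "\<bar>h\<bar>/2^n \<le> \<bar>h\<bar>/1" by (rule divide_left_mono) auto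
      hence hh: "\<bar>h/2^n\<bar> \<le> \<bar>h\<bar>" by (simp add: abs_divide)
      have hh2: "\<bar>h/2^n\<bar> < x/2" using hh hb by linarith
      have "0 < y" "0 < 2*x - y" using hh2 unfolding y1 by arith+
      hence "f ((y + (2*x-y))/2) \<le> (f y + f (2*x - y))/2" by (intro mid)
      hence "f x \<le> f y/2 + f (2*x - y)/2" by (simp add: add_divide_distrib)
      hence low: "f y \<ge> f x - D" using up2 by linarith
      have "D < C/2^n" by (simp add: D_def C_def divide_strict_right_mono)
      thus "norm (f y - f x) < r" using up1 low Cn by auto
    qed
  qed
qed

lemma midconv_chord:
  fixes g :: "real \<Rightarrow> real"
  assumes ab: "a < b" and cont: "continuous_on {a..b} g" and ga: "g a \<le> 0" and gb: "g b \<le> 0"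
    and mid: "\<And>s t. a < s \<Longrightarrow> s < t \<Longrightarrow> t < b \<Longrightarrow> 2 * g ((s+t)/2) \<le> g s + g t"
    and x: "x \<in> {a..b}"
  shows "g x \<le> 0"
proof (rule ccontr)
  assume gx: "\<not> g x \<le> 0"
  obtain t1 where t1: "t1 \<in> {a..b}" "\<And>y. y \<in> {a..b} \<Longrightarrow> g y \<le> g t1"
    using continuous_attains_sup[OF compact_Icc _ cont] ab by fastforce
  define m where "m = g t1"
  have mpos: "m > 0" using t1(2)[OF x] gx by (simp add: m_def)
  define T where "T = {t \<in> {a..b}. g t = m}"
  have clT: "closed T" unfolding T_def by (rule continuous_closed_preimage_constant[OF cont closed_atLeastAtMost])
  have neT: "T \<noteq> {}" using t1 by (auto simp: T_def m_def)
  have bdT: "bdd_below T" by (rule bdd_belowI[of _ a]) (auto simp: T_def)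
  define t0 where "t0 = Inf T"
  have t0T: "t0 \<in> T" unfolding t0_def by (rule closed_contains_Inf[OF neT bdT clT])
  have t0a: "a < t0" using t0T ga mpos by (auto simp: T_def) (metis order.order_iff_strict not_le)
  have t0b: "t0 < b" using t0T gb mpos by (auto simp: T_def) (metis order.order_iff_strict not_le)
  define h where "h = min (t0 - a) (b - t0) / 2"
  have hpos: "h > 0" using t0a t0b by (simp add: h_def)
  have h1: "a < t0 - h" "t0 + h < b" using t0a t0b by (auto simp: h_def min_def field_simps)
  have "g (t0 - h) \<noteq> m"
  proof
    assume "g (t0 - h) = m"
    hence "t0 - h \<in> T" using h1 hpos t0b by (auto simp: T_def)
    hence "t0 \<le> t0 - h" unfolding t0_def by (rule cInf_lower[OF _ bdT])
    thus False using hpos by simp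
  qed
  moreover have "g (t0 - h) \<le> m" using t1(2)[of "t0-h"] h1 hpos t0b by (simp add: m_def)
  ultimately have l1: "g (t0 - h) < m" by simp
  have l2: "g (t0 + h) \<le> m" using t1(2)[of "t0+h"] h1 hpos t0a by (simp add: m_def)
  have "2 * g (((t0-h)+(t0+h))/2) \<le> g (t0-h) + g (t0+h)"
    by (rule mid) (use h1 hpos in auto)
  hence "2 * g t0 \<le> g (t0-h) + g (t0+h)" by simp
  moreover have "g t0 = m" using t0T by (simp add: T_def)
  ultimately show False using l1 l2 by linarith
qed

lemma conv_lemma:
  fixes f :: "real \<Rightarrow> real"
  assumes f0: "f 0 = 0"
    and mid: "\<And>s t. 0<s \<Longrightarrow> 0<t \<Longrightarrow> 2 * f ((s+t)/2) \<le> f s + f t"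
    and bnd: "\<And>R. 0<R \<Longrightarrow> \<exists>M. \<forall>t. 0<t \<and> t\<le>R \<longrightarrow> f t \<le> M"
    and lim0: "(f \<longlongrightarrow> 0) (at_right 0)"
  shows "convex_on {0..} f"
proof -
  have mid': "f ((s+t)/2) \<le> (f s + f t)/2" if "0<s" "0<t" for s t
    using mid[OF that] by (simp add: field_simps)
  have cont: "isCont f x" if "0 < x" for x
    by (rule midconv_isCont[OF mid' bnd that]) auto
  have contw: "continuous_on {0..b} f" for b
  proof -
    have "continuous (at x within {0..b}) f" if "x \<in> {0..b}" for x
    proof (cases "x = 0")
      case True
      have "(f \<longlongrightarrow> 0) (at 0 within {0<..})" using lim0 by simp
      hence "(f \<longlongrightarrow> 0) (at 0 within ({0..b} - {0}))"
        by (rule tendsto_within_subset) auto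
      moreover have "at (0::real) within ({0..b} - {0}) = at 0 within {0..b}"
        by (simp add: at_within_def)
      ultimately show ?thesis using True f0 by (simp add: continuous_within)
    next
      case False
      then show ?thesis using that cont[of x] by (simp add: continuous_at_imp_continuous_within)
    qed
    thus ?thesis by (simp add: continuous_on_eq_continuous_within)
  qed
  show ?thesis
  proof (rule convex_on_linorderI)
    show "convex {0::real..}" by (simp add: convex_real_interval)
    fix t x y :: real
    assume t: "0 < t" "t < 1" and xy: "x \<in> {0..}" "y \<in> {0..}" "x < y"
    define k where "k = (f y - f x) / (y - x)"
    define g where "g z = f z - (f x + k * (z - x))" for z
    have gc: "continuous_on {x..y} g" unfolding g_def
      by (intro continuous_intros continuous_on_subset[OF contw[of y]]) (use xy in auto)
    have gx: "g x \<le> 0" "g y \<le> 0" using xy by (auto simp: g_def k_def)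
    have gm: "2 * g ((s+u)/2) \<le> g s + g u" if "x < s" "s < u" "u < y" for s u
    proof -
      have "2 * f ((s+u)/2) \<le> f s + f u" using that xy by (intro mid) auto
      moreover have "2 * (k * ((s+u)/2 - x)) = k * (s - x) + k * (u - x)"
        by (simp add: field_simps)
      moreover have "g ((s+u)/2) = f((s+u)/2) - f x - k*((s+u)/2 - x)" "g s = f s - f x - k*(s-x)"
        "g u = f u - f x - k*(u-x)" by (simp_all add: g_def)
      ultimately show ?thesis by linarith
    qed
    define p where "p = (1 - t) *\<^sub>R x + t *\<^sub>R y"
    have pe: "p = x + t*(y-x)" by (simp add: p_def algebra_simps)
    have "0 \<le> t*(y-x)" "t*(y-x) \<le> 1*(y-x)" using t xy by (auto intro: mult_right_mono)
    hence pin: "p \<in> {x..y}" unfolding pe by simp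
    have "g p \<le> 0" by (rule midconv_chord[OF \<open>x<y\<close> gc gx gm pin])
    moreover have "k * (p - x) = (f y - f x) * t" using xy by (simp add: p_def k_def field_simps)
    ultimately have "f p \<le> f x + (f y - f x) * t" unfolding g_def by linarith
    thus "f ((1 - t) *\<^sub>R x + t *\<^sub>R y) \<le> (1 - t) * f x + t * f y"
      unfolding p_def by (simp add: algebra_simps)
  qed
qed

lemma conv_mono:
  fixes f :: "real \<Rightarrow> real"
  assumes cv: "convex_on {0..} f" and f0: "f 0 = 0" and nn: "\<And>t. 0 \<le> t \<Longrightarrow> 0 \<le> f t"
    and s: "0 \<le> s" "s \<le> t"
  shows "f s \<le> f t"
proof (cases "t = 0")
  case True then show ?thesis using s by simp
next
  case False
  hence tp: "t > 0" using s by simp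
  define th where "th = s / t"
  have th: "0 \<le> th" "th \<le> 1" using s tp by (auto simp: th_def)
  have "f ((1 - th) *\<^sub>R 0 + th *\<^sub>R t) \<le> (1 - th) * f 0 + th * f t"
    by (rule convex_onD[OF cv th]) (use tp in auto)
  moreover have "th * t = s" using tp by (simp add: th_def)
  ultimately have "f s \<le> th * f t" using f0 by simp
  also have "\<dots> \<le> 1 * f t" using th nn[of t] tp by (intro mult_right_mono) auto
  finally show ?thesis by simp
qed

lemma pos_fun_convex:
  fixes f :: "real \<Rightarrow> real"
  assumes f0: "f 0 = 0" and pos: "\<And>t. t > 0 \<Longrightarrow> f t > 0"
    and mid: "\<And>s t. 0<s \<Longrightarrow> 0<t \<Longrightarrow> 2 * f ((s+t)/2) \<le> f s + f t"
    and incr: "almost_incr_on {0<..} \<beta> (\<lambda>t. f t / t powr pm)"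
    and decr: "almost_decr_on {0<..} \<beta> (\<lambda>t. f t / t powr pp)"
    and p: "0 < pm" "pm \<le> pp"
  shows "convex_on {0..} f"
proof (rule conv_lemma[OF f0 mid])
  have b1: "f t \<le> \<beta> * f 1 * t powr pm" if "0 < t" "t \<le> 1" for t
  proof -
    have "f t / t powr pm \<le> \<beta> * (f 1 / 1 powr pm)"
      using incr[unfolded almost_incr_on_def, rule_format, of t 1] that by simp
    thus ?thesis using that by (simp add: divide_le_eq mult_ac)
  qed
  have b2: "f t \<le> \<beta> * f 1 * t powr pp" if "1 \<le> t" for t
  proof -
    have "\<beta> * (f 1 / 1 powr pp) \<ge> f t / t powr pp"
      using decr[unfolded almost_decr_on_def, rule_format, of 1 t] that by simp
    thus ?thesis using that by (simp add: divide_le_eq mult_ac)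
  qed
  have bf: "\<beta> * f 1 > 0"
  proof -
    have "0 < f (1/2)" by (rule pos) simp
    also have "\<dots> \<le> \<beta> * f 1 * (1/2) powr pm" by (rule b1) auto
    finally show ?thesis by (simp add: zero_less_mult_iff)
  qed
  show "\<exists>M. \<forall>t. 0<t \<and> t\<le>R \<longrightarrow> f t \<le> M" if "0 < R" for R
  proof (intro exI[of _ "\<beta> * f 1 * max 1 (R powr pp)"] allI impI)
    fix t assume t: "0 < t \<and> t \<le> R"
    show "f t \<le> \<beta> * f 1 * max 1 (R powr pp)"
    proof (cases "t \<le> 1")
      case True
      have "f t \<le> \<beta> * f 1 * t powr pm" using b1 t True by auto
      also have "\<dots> \<le> \<beta> * f 1 * 1" using bf True t p
        by (intro mult_left_mono) (auto intro: powr_le1)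
      also have "\<dots> \<le> \<beta> * f 1 * max 1 (R powr pp)" using bf by (intro mult_left_mono) auto
      finally show ?thesis .
    next
      case False
      have "f t \<le> \<beta> * f 1 * t powr pp" using b2 False by auto
      also have "\<dots> \<le> \<beta> * f 1 * R powr pp" using bf t p
        by (intro mult_left_mono powr_mono2) auto
      also have "\<dots> \<le> \<beta> * f 1 * max 1 (R powr pp)" using bf by (intro mult_left_mono) auto
      finally show ?thesis .
    qed
  qed
  show "(f \<longlongrightarrow> 0) (at_right 0)"
  proof (rule tendsto_sandwich[of "\<lambda>_. 0" _ _ "\<lambda>t. \<beta> * f 1 * t powr pm"])
    show "\<forall>\<^sub>F n in at_right 0. 0 \<le> f n"
      using pos by (auto simp: eventually_at_right_less less_imp_le intro: eventually_mono[OF eventually_at_right_less])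
    have "\<forall>\<^sub>F n in at_right (0::real). 0 < n \<and> n < 1" unfolding eventually_at_right_field by (intro exI[of _ 1]) auto
    thus "\<forall>\<^sub>F n in at_right 0. f n \<le> \<beta> * f 1 * n powr pm"
      by (rule eventually_mono) (use b1 in auto)
    show "((\<lambda>_. 0) \<longlongrightarrow> (0::real)) (at_right 0)" by simp
    have "((\<lambda>t. t powr pm) \<longlongrightarrow> 0) (at_right (0::real))"
      by (rule tendsto_zero_powrI) (auto simp: p eventually_at_right_less less_imp_le
          intro: eventually_mono[OF eventually_at_right_less] tendsto_ident_at)
    thus "((\<lambda>t. \<beta> * f 1 * t powr pm) \<longlongrightarrow> 0) (at_right 0)"
      using tendsto_mult_left[of _ 0 _ "\<beta> * f 1"] by auto
  qed
qed

lemma powr_conv0: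
  fixes p :: real assumes p: "1 \<le> p"
  shows "convex_on {0..} (\<lambda>t. t powr p)"
proof (rule pos_fun_convex[where \<beta>=1 and pm=p and pp=p])
  show "2 * ((s + t) / 2) powr p \<le> s powr p + t powr p" if "0<s" "0<t" for s t
  proof -
    have "((1 - 1/2) *\<^sub>R s + (1/2) *\<^sub>R t) powr p \<le> (1 - 1/2) * s powr p + (1/2) * t powr p"
      by (rule convex_onD[OF powr_convex[OF p]]) (use that in auto)
    hence "((s+t)/2) powr p \<le> s powr p / 2 + t powr p / 2" by (simp add: add_divide_distrib)
    thus ?thesis by linarith
  qed
  show "almost_incr_on {0<..} 1 (\<lambda>t. t powr p / t powr p)"
    unfolding almost_incr_on_def by auto
  show "almost_decr_on {0<..} 1 (\<lambda>t. t powr p / t powr p)"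
    unfolding almost_decr_on_def by auto
qed (use p in auto)

lemma phi_good:
  fixes \<phi> :: "real \<Rightarrow> 'b \<Rightarrow> 'b \<Rightarrow> real" and M :: "('b \<times> 'b) measure"
  assumes C2: "\<And>\<epsilon>. \<epsilon> > 0 \<Longrightarrow> \<exists>\<delta>. 0 < \<delta> \<and> \<delta> < 1 \<and>
       (AE z in M. \<forall>s t. s > 0 \<and> t > 0 \<and> \<bar>s - t\<bar> \<ge> \<epsilon> * max s t \<longrightarrow>
          \<phi> ((s + t) / 2) (fst z) (snd z) \<le> (1 - \<delta>) * ((\<phi> s (fst z) (snd z) + \<phi> t (fst z) (snd z)) / 2))"
    and C3: "AE z in M.
       almost_incr_on {0<..} \<beta> (\<lambda>t. \<phi> t (fst z) (snd z) / t powr pm) \<and>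
       almost_decr_on {0<..} \<beta> (\<lambda>t. \<phi> t (fst z) (snd z) / t powr pp)"
    and C4: "AE z in M.
       1 / c1 \<le> \<phi> 1 (fst z) (snd z) \<and> \<phi> 1 (fst z) (snd z) \<le> c1 \<and>
       \<phi> 0 (fst z) (snd z) = 0 \<and> (\<forall>t>0. \<phi> t (fst z) (snd z) > 0)"
    and p: "0 < pm" "pm \<le> pp"
  shows "AE z in M. convex_on {0..} (\<lambda>t. \<phi> t (fst z) (snd z)) \<and> \<phi> 0 (fst z) (snd z) = 0
      \<and> (\<forall>t\<ge>0. 0 \<le> \<phi> t (fst z) (snd z))"
proof -
  have "AE z in M. \<exists>\<delta>. 0 < \<delta> \<and> \<delta> < 1 \<and> (\<forall>s t. s > 0 \<and> t > 0 \<and> \<bar>s - t\<bar> \<ge> (1 / real (Suc n)) * max s t \<longrightarrow>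
          \<phi> ((s + t) / 2) (fst z) (snd z) \<le> (1 - \<delta>) * ((\<phi> s (fst z) (snd z) + \<phi> t (fst z) (snd z)) / 2))" for n
  proof -
    obtain \<delta> where d: "0 < \<delta>" "\<delta> < 1" and ae: "AE z in M. \<forall>s t. s > 0 \<and> t > 0 \<and> \<bar>s - t\<bar> \<ge> (1 / real (Suc n)) * max s t \<longrightarrow>
          \<phi> ((s + t) / 2) (fst z) (snd z) \<le> (1 - \<delta>) * ((\<phi> s (fst z) (snd z) + \<phi> t (fst z) (snd z)) / 2)"
      using C2[of "1 / real (Suc n)"] by auto
    show ?thesis using ae by (rule eventually_mono) (use d in blast)
  qed
  hence "AE z in M. \<forall>n. \<exists>\<delta>. 0 < \<delta> \<and> \<delta> < 1 \<and> (\<forall>s t. s > 0 \<and> t > 0 \<and> \<bar>s - t\<bar> \<ge> (1 / real (Suc n)) * max s t \<longrightarrow>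
          \<phi> ((s + t) / 2) (fst z) (snd z) \<le> (1 - \<delta>) * ((\<phi> s (fst z) (snd z) + \<phi> t (fst z) (snd z)) / 2))"
    by (simp add: AE_all_countable)
  with C3 C4 show ?thesis
  proof eventually_elim
    case (elim z)
    define f where "f t = \<phi> t (fst z) (snd z)" for t
    have f0: "f 0 = 0" and pos: "\<And>t. t > 0 \<Longrightarrow> f t > 0" using elim(2) by (auto simp: f_def)
    have mid: "2 * f ((s+t)/2) \<le> f s + f t" if st: "0 < s" "0 < t" for s t
    proof (cases "s = t")
      case True then show ?thesis by simp
    next
      case False
      have mp: "max s t > 0" using st by simp
      have "\<bar>s - t\<bar> / max s t > 0" using False mp by simp
      then obtain n where n: "inverse (real (Suc n)) < \<bar>s - t\<bar> / max s t"
        using reals_Archimedean by blast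
      hence n': "\<bar>s - t\<bar> \<ge> (1 / real (Suc n)) * max s t" using mp
        by (simp add: inverse_eq_divide pos_less_divide_eq less_imp_le mult.commute)
      obtain \<delta> where d: "0 < \<delta>" "\<delta> < 1" and
        H: "\<And>s t. s > 0 \<Longrightarrow> t > 0 \<Longrightarrow> \<bar>s - t\<bar> \<ge> (1 / real (Suc n)) * max s t \<Longrightarrow>
          f ((s + t) / 2) \<le> (1 - \<delta>) * ((f s + f t) / 2)"
        using elim(3) unfolding f_def by blast
      have "f ((s + t) / 2) \<le> (1 - \<delta>) * ((f s + f t) / 2)" by (rule H[OF st n'])
      also have "\<dots> \<le> 1 * ((f s + f t) / 2)"
        using d pos[OF st(1)] pos[OF st(2)] by (intro mult_right_mono) auto
      finally show ?thesis by simp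
    qed
    have "convex_on {0..} f"
      by (rule pos_fun_convex[OF f0 pos mid _ _ p, of \<beta>]) (use elim(1) in \<open>auto simp: f_def\<close>)
    moreover have "\<forall>t\<ge>0. 0 \<le> f t" using f0 pos by (metis less_eq_real_def)
    ultimately show ?case using f0 unfolding f_def by auto
  qed
qed



lemma meas_powr[measurable]:
  fixes u :: "'b \<Rightarrow> complex"
  assumes "u \<in> borel_measurable M"
  shows "(\<lambda>x. ennreal (cmod (u x) powr p)) \<in> borel_measurable M"
  using assms by measurable

lemma norm_le_powr: fixes x p :: real assumes "0 \<le> x" "1 \<le> p" shows "x \<le> 1 + x powr p"
proof (cases "x \<le> 1")
  case True then show ?thesis by (smt (verit) powr_ge_zero)
next
  case False
  hence "x powr 1 \<le> x powr p" using assms by (intro powr_mono) auto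
  thus ?thesis using False by (smt (verit) powr_one)
qed

lemma locLp_imp_locint:
  assumes L: "loc_Lp p \<Omega> u" and p: "1 \<le> p"
  shows "loc_integrable \<Omega> u"
  unfolding loc_integrable_def
proof (intro conjI allI impI)
  show um: "u \<in> borel_measurable (lebesgue_on \<Omega>)" using L by (simp add: loc_Lp_def)
  fix K assume K: "compact K \<and> K \<subseteq> \<Omega>"
  have umK: "u \<in> borel_measurable (lebesgue_on K)"
    by (rule measurable_restrict_mono[OF um]) (use K in auto)
  have Kl: "K \<in> lmeasurable" using K lmeasurable_compact by blast
  have eq: "emeasure (lebesgue_on K) K = emeasure lebesgue K"
    by (rule emeasure_restrict_space) (use Kl in auto)
  have "emeasure lebesgue K \<noteq> \<infinity>" using fmeasurableD2[OF Kl] by simp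
  hence eK: "emeasure (lebesgue_on K) K < \<infinity>" unfolding eq by (simp add: less_top)
  have fin: "(\<integral>\<^sup>+ x. ennreal (cmod (u x) powr p) \<partial>lebesgue_on K) < \<infinity>"
    using L K by (simp add: loc_Lp_def)
  have "(\<integral>\<^sup>+ x. ennreal (norm (u x)) \<partial>lebesgue_on K) \<le> (\<integral>\<^sup>+ x. 1 + ennreal (cmod (u x) powr p) \<partial>lebesgue_on K)"
  proof (rule nn_integral_mono)
    fix x
    have "norm (u x) \<le> 1 + cmod (u x) powr p" by (rule norm_le_powr) (use p in auto)
    hence "ennreal (norm (u x)) \<le> ennreal (1 + cmod (u x) powr p)" by (rule ennreal_leI)
    thus "ennreal (norm (u x)) \<le> 1 + ennreal (cmod (u x) powr p)" by (simp add: ennreal_plus)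
  qed
  also have "\<dots> = (\<integral>\<^sup>+ x. 1 \<partial>lebesgue_on K) + (\<integral>\<^sup>+ x. ennreal (cmod (u x) powr p) \<partial>lebesgue_on K)"
    by (rule nn_integral_add) (use umK in auto)
  also have "\<dots> < \<infinity>" using eK fin by simp
  finally show "integrable (lebesgue_on K) u" by (intro integrableI_bounded umK)
qed

lemma locLp_meas: "loc_Lp p \<Omega> u \<Longrightarrow> u \<in> borel_measurable (lebesgue_on \<Omega>)"
  by (simp add: loc_Lp_def)

lemma locLp_cmult:
  assumes L: "loc_Lp p \<Omega> u" and p: "0 \<le> p"
  shows "loc_Lp p \<Omega> (\<lambda>x. c * u x)"
  unfolding loc_Lp_def
proof (intro conjI allI impI)
  show "(\<lambda>x. c * u x) \<in> borel_measurable (lebesgue_on \<Omega>)" using locLp_meas[OF L] by measurable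
  fix K assume K: "compact K \<and> K \<subseteq> \<Omega>"
  have umK: "u \<in> borel_measurable (lebesgue_on K)"
    by (rule measurable_restrict_mono[OF locLp_meas[OF L]]) (use K in auto)
  have "(\<integral>\<^sup>+ x. ennreal (cmod (c * u x) powr p) \<partial>lebesgue_on K) = (\<integral>\<^sup>+ x. ennreal (cmod c powr p) * ennreal (cmod (u x) powr p) \<partial>lebesgue_on K)"
    by (rule nn_integral_cong) (simp add: norm_mult powr_mult ennreal_mult)
  also have "\<dots> = ennreal (cmod c powr p) * (\<integral>\<^sup>+ x. ennreal (cmod (u x) powr p) \<partial>lebesgue_on K)"
    by (rule nn_integral_cmult) (use umK in measurable)
  also have "\<dots> < \<infinity>" using L K by (simp add: loc_Lp_def ennreal_mult_less_top)
  finally show "(\<integral>\<^sup>+ x. ennreal (cmod (c * u x) powr p) \<partial>lebesgue_on K) < \<infinity>" .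
qed

lemma powr_add_le:
  fixes a b p :: real assumes "0 \<le> a" "0 \<le> b" "0 \<le> p"
  shows "(a + b) powr p \<le> 2 powr p * (a powr p + b powr p)"
proof -
  have "(a + b) powr p \<le> (2 * max a b) powr p" using assms by (intro powr_mono2) auto
  also have "\<dots> = 2 powr p * max a b powr p" using assms by (simp add: powr_mult)
  also have "max a b powr p \<le> a powr p + b powr p"
    by (cases "a \<le> b") (auto simp: max_def)
  hence "2 powr p * max a b powr p \<le> 2 powr p * (a powr p + b powr p)" by (intro mult_left_mono) auto
  finally show ?thesis .
qed

lemma locLp_add:
  assumes L: "loc_Lp p \<Omega> u" "loc_Lp p \<Omega> v" and p: "0 \<le> p"
  shows "loc_Lp p \<Omega> (\<lambda>x. u x + v x)"
  unfolding loc_Lp_def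
proof (intro conjI allI impI)
  show "(\<lambda>x. u x + v x) \<in> borel_measurable (lebesgue_on \<Omega>)" using locLp_meas[OF L(1)] locLp_meas[OF L(2)] by measurable
  fix K assume K: "compact K \<and> K \<subseteq> \<Omega>"
  have umK: "u \<in> borel_measurable (lebesgue_on K)" "v \<in> borel_measurable (lebesgue_on K)"
    by (rule measurable_restrict_mono[OF locLp_meas[OF L(1)]], use K in auto)
       (rule measurable_restrict_mono[OF locLp_meas[OF L(2)]], use K in auto)
  have "(\<integral>\<^sup>+ x. ennreal (cmod (u x + v x) powr p) \<partial>lebesgue_on K) \<le> (\<integral>\<^sup>+ x. ennreal (2 powr p) * ennreal (cmod (u x) powr p) + ennreal (2 powr p) * ennreal (cmod (v x) powr p) \<partial>lebesgue_on K)"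
  proof (rule nn_integral_mono)
    fix x
    have "cmod (u x + v x) powr p \<le> (cmod (u x) + cmod (v x)) powr p" using p by (intro powr_mono2 norm_triangle_ineq) auto
    also have "\<dots> \<le> 2 powr p * (cmod (u x) powr p + cmod (v x) powr p)" by (rule powr_add_le) (use p in auto)
    finally have "ennreal (cmod (u x + v x) powr p) \<le> ennreal (2 powr p * (cmod (u x) powr p + cmod (v x) powr p))" by (rule ennreal_leI)
    thus "ennreal (cmod (u x + v x) powr p) \<le> ennreal (2 powr p) * ennreal (cmod (u x) powr p) + ennreal (2 powr p) * ennreal (cmod (v x) powr p)"
      by (simp add: ennreal_mult ennreal_plus distrib_left)
  qed
  also have "\<dots> = ennreal (2 powr p) * (\<integral>\<^sup>+ x. ennreal (cmod (u x) powr p) \<partial>lebesgue_on K) + ennreal (2 powr p) * (\<integral>\<^sup>+ x. ennreal (cmod (v x) powr p) \<partial>lebesgue_on K)"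
    using umK by (simp add: nn_integral_add nn_integral_cmult)
  also have "\<dots> < \<infinity>" using L K by (simp add: loc_Lp_def ennreal_mult_less_top)
  finally show "(\<integral>\<^sup>+ x. ennreal (cmod (u x + v x) powr p) \<partial>lebesgue_on K) < \<infinity>" .
qed

lemma locLp_zero: "loc_Lp p \<Omega> (\<lambda>x. 0)"
  by (simp add: loc_Lp_def)

lemma locLp_div:
  assumes "loc_Lp p \<Omega> u" "0 \<le> p"
  shows "loc_Lp p \<Omega> (\<lambda>x. u x / c)"
  using locLp_cmult[OF assms, of "inverse c"] by (simp add: divide_inverse mult.commute)

lemma modp_cmult:
  assumes um: "u \<in> borel_measurable (lebesgue_on \<Omega>)" and p: "0 \<le> p"
  shows "modp p \<Omega> (\<lambda>x. c * u x) = ennreal (cmod c powr p) * modp p \<Omega> u"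
proof -
  have "modp p \<Omega> (\<lambda>x. c * u x) = (\<integral>\<^sup>+ x. ennreal (cmod c powr p) * ennreal (cmod (u x) powr p) \<partial>lebesgue_on \<Omega>)"
    unfolding modp_def by (rule nn_integral_cong) (simp add: norm_mult powr_mult ennreal_mult)
  also have "\<dots> = ennreal (cmod c powr p) * modp p \<Omega> u"
    unfolding modp_def by (rule nn_integral_cmult) (use um in measurable)
  finally show ?thesis .
qed

lemma modp_zero: "0 < p \<Longrightarrow> modp p \<Omega> (\<lambda>x. 0) = 0"
  by (simp add: modp_def)

lemma modp_convex:
  assumes um: "U \<in> borel_measurable (lebesgue_on \<Omega>)" "V \<in> borel_measurable (lebesgue_on \<Omega>)"
    and p: "1 \<le> p" and th: "0 \<le> \<theta>" "\<theta> \<le> 1"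
  shows "modp p \<Omega> (\<lambda>x. complex_of_real \<theta> * U x + complex_of_real (1 - \<theta>) * V x)
      \<le> ennreal \<theta> * modp p \<Omega> U + ennreal (1 - \<theta>) * modp p \<Omega> V"
proof -
  let ?f = "\<lambda>t::real. t powr p"
  have cv: "convex_on {0..} ?f" by (rule powr_conv0[OF p])
  have f0: "?f 0 = 0" using p by simp
  have nn: "\<And>t. 0 \<le> t \<Longrightarrow> 0 \<le> ?f t" by simp
  have "modp p \<Omega> (\<lambda>x. complex_of_real \<theta> * U x + complex_of_real (1 - \<theta>) * V x)
      \<le> (\<integral>\<^sup>+ x. ennreal \<theta> * ennreal (cmod (U x) powr p) + ennreal (1 - \<theta>) * ennreal (cmod (V x) powr p) \<partial>lebesgue_on \<Omega>)"
    unfolding modp_def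
  proof (rule nn_integral_mono)
    fix x
    have "cmod (complex_of_real \<theta> * U x + complex_of_real (1 - \<theta>) * V x) \<le> \<theta> * cmod (U x) + (1 - \<theta>) * cmod (V x)"
      using th by (smt (verit) norm_mult norm_of_real norm_triangle_ineq)
    hence "?f (cmod (complex_of_real \<theta> * U x + complex_of_real (1 - \<theta>) * V x)) \<le> ?f (\<theta> * cmod (U x) + (1 - \<theta>) * cmod (V x))"
      by (intro conv_mono[OF cv f0 nn]) auto
    also have "\<dots> \<le> (1 - (1 - \<theta>)) * ?f (cmod (U x)) + (1 - \<theta>) * ?f (cmod (V x))"
      using convex_onD[OF cv, of "1 - \<theta>" "cmod (U x)" "cmod (V x)"] th by (simp add: algebra_simps)
    finally have "ennreal (?f (cmod (complex_of_real \<theta> * U x + complex_of_real (1 - \<theta>) * V x))) \<le> ennreal (\<theta> * ?f (cmod (U x)) + (1 - \<theta>) * ?f (cmod (V x)))"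
      by (intro ennreal_leI) simp
    thus "ennreal (cmod (complex_of_real \<theta> * U x + complex_of_real (1 - \<theta>) * V x) powr p) \<le> ennreal \<theta> * ennreal (cmod (U x) powr p) + ennreal (1 - \<theta>) * ennreal (cmod (V x) powr p)"
      using th by (simp add: ennreal_mult ennreal_plus)
  qed
  also have "\<dots> = ennreal \<theta> * modp p \<Omega> U + ennreal (1 - \<theta>) * modp p \<Omega> V"
    unfolding modp_def using um by (simp add: nn_integral_add nn_integral_cmult)
  finally show ?thesis .
qed



lemma gauge_le: "0 < l \<Longrightarrow> H (\<lambda>x. u x / complex_of_real l) \<le> 1 \<Longrightarrow> gauge H u \<le> ennreal l"
  unfolding gauge_def by (rule Inf_lower) auto

lemma gauge_ge: "(\<And>l. 0 < l \<Longrightarrow> H (\<lambda>x. u x / complex_of_real l) \<le> 1 \<Longrightarrow> y \<le> ennreal l) \<Longrightarrow> y \<le> gauge H u"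
  unfolding gauge_def by (rule Inf_greatest) auto

lemma gauge_lt:
  assumes "gauge H u < ennreal y"
  shows "\<exists>l>0. l < y \<and> H (\<lambda>x. u x / complex_of_real l) \<le> 1"
proof -
  obtain z where z: "z \<in> {ennreal l | l. l > 0 \<and> H (\<lambda>x. u x / complex_of_real l) \<le> 1}" "z < ennreal y"
    using assms unfolding gauge_def by (auto simp: Inf_less_iff)
  then obtain l where l: "l > 0" "H (\<lambda>x. u x / complex_of_real l) \<le> 1" "z = ennreal l" by auto
  have "l < y" using z(2) l by (simp add: ennreal_less_iff)
  thus ?thesis using l by auto
qed

lemma gauge_hom_ge:
  assumes Hs: "\<And>w l c. c \<noteq> 0 \<Longrightarrow> l > 0 \<Longrightarrow> H (\<lambda>x. c * w x / complex_of_real l) = H (\<lambda>x. w x / complex_of_real (l / cmod c))"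
    and c: "c \<noteq> 0"
  shows "ennreal (cmod c) * gauge H u \<le> gauge H (\<lambda>x. c * u x)"
proof (rule gauge_ge)
  fix l :: real assume l: "0 < l" "H (\<lambda>x. c * u x / complex_of_real l) \<le> 1"
  have "H (\<lambda>x. u x / complex_of_real (l / cmod c)) \<le> 1" using l Hs[OF c l(1), of u] by simp
  hence "gauge H u \<le> ennreal (l / cmod c)" by (rule gauge_le[rotated]) (use l c in simp)
  hence "ennreal (cmod c) * gauge H u \<le> ennreal (cmod c) * ennreal (l / cmod c)" by (rule mult_left_mono) simp
  also have "\<dots> = ennreal (cmod c * (l / cmod c))" using l by (subst ennreal_mult) auto
  also have "\<dots> = ennreal l" using c by simp
  finally show "ennreal (cmod c) * gauge H u \<le> ennreal l" .
qed

lemma gauge_hom: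
  assumes Hs: "\<And>w l c. c \<noteq> 0 \<Longrightarrow> l > 0 \<Longrightarrow> H (\<lambda>x. c * w x / complex_of_real l) = H (\<lambda>x. w x / complex_of_real (l / cmod c))"
    and c: "c \<noteq> 0"
  shows "gauge H (\<lambda>x. c * u x) = ennreal (cmod c) * gauge H u"
proof (rule antisym)
  show "ennreal (cmod c) * gauge H u \<le> gauge H (\<lambda>x. c * u x)" by (rule gauge_hom_ge[OF Hs c])
  have "ennreal (cmod (1/c)) * gauge H (\<lambda>x. c * u x) \<le> gauge H (\<lambda>x. (1/c) * (c * u x))"
    by (rule gauge_hom_ge[OF Hs]) (use c in auto)
  also have "(\<lambda>x. (1/c) * (c * u x)) = u" using c by auto
  finally have "ennreal (cmod c) * (ennreal (cmod (1/c)) * gauge H (\<lambda>x. c * u x)) \<le> ennreal (cmod c) * gauge H u"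
    by (rule mult_left_mono) simp
  moreover have "ennreal (cmod c) * (ennreal (cmod (1/c)) * gauge H (\<lambda>x. c * u x)) = gauge H (\<lambda>x. c * u x)"
    using c by (simp add: mult.assoc[symmetric] norm_divide flip: ennreal_mult)
  ultimately show "gauge H (\<lambda>x. c * u x) \<le> ennreal (cmod c) * gauge H u" by simp
qed

lemma gauge_tri:
  assumes Pd: "\<And>w l. P w \<Longrightarrow> l > 0 \<Longrightarrow> P (\<lambda>x. w x / complex_of_real l)"
    and Hc: "\<And>U V \<theta>. P U \<Longrightarrow> P V \<Longrightarrow> 0 \<le> \<theta> \<Longrightarrow> \<theta> \<le> 1 \<Longrightarrow>
       H (\<lambda>x. complex_of_real \<theta> * U x + complex_of_real (1 - \<theta>) * V x) \<le> ennreal \<theta> * H U + ennreal (1 - \<theta>) * H V"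
    and Pu: "P u" and Pv: "P v"
  shows "gauge H (\<lambda>x. u x + v x) \<le> gauge H u + gauge H v"
proof (rule ennreal_le_epsilon)
  fix e :: real assume fin: "gauge H u + gauge H v < top" and e: "0 < e"
  obtain gu where gu: "gauge H u = ennreal gu" "0 \<le> gu" using fin by (cases "gauge H u" rule: ennreal_cases) auto
  obtain gv where gv: "gauge H v = ennreal gv" "0 \<le> gv" using fin by (cases "gauge H v" rule: ennreal_cases) auto
  obtain l where l: "l > 0" "l < gu + e/2" "H (\<lambda>x. u x / complex_of_real l) \<le> 1"
    using gauge_lt[of H u "gu + e/2"] gu e by (simp add: ennreal_less_iff) blast
  obtain m where m: "m > 0" "m < gv + e/2" "H (\<lambda>x. v x / complex_of_real m) \<le> 1"
    using gauge_lt[of H v "gv + e/2"] gv e by (simp add: ennreal_less_iff) blast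
  define \<theta> where "\<theta> = l / (l + m)"
  have th: "0 \<le> \<theta>" "\<theta> \<le> 1" using l m by (auto simp: \<theta>_def)
  have th1: "1 - \<theta> = m / (l + m)" using l m by (simp add: \<theta>_def field_simps)
  have eqf: "(\<lambda>x. complex_of_real \<theta> * (u x / complex_of_real l) + complex_of_real (1 - \<theta>) * (v x / complex_of_real m))
      = (\<lambda>x. (u x + v x) / complex_of_real (l + m))"
  proof
    fix x
    define L where "L = complex_of_real l"
    define M where "M = complex_of_real m"
    have L: "L \<noteq> 0" "M \<noteq> 0" using l m by (auto simp: L_def M_def)
    have LM: "L + M \<noteq> 0" unfolding L_def M_def using l m by (metis of_real_add of_real_eq_0_iff add_pos_pos less_irrefl)
    have t1: "complex_of_real \<theta> = L / (L + M)" by (simp add: \<theta>_def L_def M_def)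
    have t2: "complex_of_real (1 - \<theta>) = M / (L + M)" by (simp add: th1 L_def M_def)
    have e1: "L / (L + M) * (u x / L) = u x / (L + M)" using L LM by (simp add: field_simps)
    have e2: "M / (L + M) * (v x / M) = v x / (L + M)" using L LM by (simp add: field_simps)
    show "complex_of_real \<theta> * (u x / complex_of_real l) + complex_of_real (1 - \<theta>) * (v x / complex_of_real m)
      = (u x + v x) / complex_of_real (l + m)"
      unfolding t1 t2 L_def[symmetric] M_def[symmetric] e1 e2
      by (simp add: L_def M_def add_divide_distrib)
  qed
  have "H (\<lambda>x. (u x + v x) / complex_of_real (l + m)) \<le> ennreal \<theta> * H (\<lambda>x. u x / complex_of_real l) + ennreal (1 - \<theta>) * H (\<lambda>x. v x / complex_of_real m)"
    unfolding eqf[symmetric] by (rule Hc[OF Pd[OF Pu l(1)] Pd[OF Pv m(1)] th])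
  also have "\<dots> \<le> ennreal \<theta> * 1 + ennreal (1 - \<theta>) * 1"
    by (intro add_mono mult_left_mono l(3) m(3)) auto
  also have "\<dots> = 1" using th by (simp flip: ennreal_plus)
  finally have "gauge H (\<lambda>x. u x + v x) \<le> ennreal (l + m)" by (rule gauge_le[rotated]) (use l m in simp)
  also have "\<dots> \<le> ennreal (gu + gv + e)" using l m by (intro ennreal_leI) simp
  also have "\<dots> = gauge H u + gauge H v + ennreal e" using gu gv e by (simp flip: ennreal_plus)
  finally show "gauge H (\<lambda>x. u x + v x) \<le> gauge H u + gauge H v + ennreal e" .
qed



lemma open_lebesgue: "open (S :: 'b::euclidean_space set) \<Longrightarrow> S \<in> sets lebesgue"
  by (intro sets_completionI_sets) (simp add: borel_open)

lemma ae_prod: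
  fixes u :: "'b::euclidean_space \<Rightarrow> complex"
  assumes So: "open S" and ae: "AE x in lebesgue_on S. u x = 0"
  shows "AE z in lebesgue_on (S \<times> S). u (fst z) = 0 \<and> u (snd z) = 0"
proof -
  have S: "S \<in> sets lebesgue" by (rule open_lebesgue[OF So])
  have "AE x in lebesgue. x \<in> S \<longrightarrow> u x = 0" using ae S by (simp add: AE_restrict_space_iff)
  hence "AE x in lborel. x \<in> S \<longrightarrow> u x = 0" by (simp add: AE_completion_iff)
  then obtain N where N: "{x \<in> space lborel. \<not> (x \<in> S \<longrightarrow> u x = 0)} \<subseteq> N" "emeasure lborel N = 0" "N \<in> sets lborel"
    by (rule AE_E)
  have "N \<times> UNIV \<in> null_sets (lborel \<Otimes>\<^sub>M (lborel :: 'b measure))" using N by (intro lborel.times_in_null_sets1) auto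
  moreover have "UNIV \<times> N \<in> null_sets (lborel \<Otimes>\<^sub>M (lborel :: 'b measure))" using N by (intro lborel.times_in_null_sets2) auto
  ultimately have "N \<times> UNIV \<union> UNIV \<times> N \<in> null_sets (lborel \<Otimes>\<^sub>M (lborel :: 'b measure))" by (rule null_sets.Un)
  hence nul: "N \<times> UNIV \<union> UNIV \<times> N \<in> null_sets (lborel :: ('b \<times> 'b) measure)" by (simp only: lborel_prod)
  have "AE z in (lborel :: ('b \<times> 'b) measure). z \<in> S \<times> S \<longrightarrow> u (fst z) = 0 \<and> u (snd z) = 0"
    by (rule AE_I'[OF nul]) (use N in auto)
  hence "AE z in lebesgue. z \<in> S \<times> S \<longrightarrow> u (fst z) = 0 \<and> u (snd z) = 0" by (simp add: AE_completion_iff)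
  moreover have "S \<times> S \<in> sets lebesgue" by (intro open_lebesgue open_Times So)
  ultimately show ?thesis by (subst AE_restrict_space_iff) auto
qed

lemma cmod_div_diff: "cmod (w x / complex_of_real r - w y / complex_of_real r) = cmod (w x - w y) / \<bar>r\<bar>"
  by (simp add: diff_divide_distrib[symmetric] norm_divide)

lemma cmod_cdiv_diff: "cmod (c * w x / complex_of_real r - c * w y / complex_of_real r) = cmod c * cmod (w x - w y) / \<bar>r\<bar>"
  by (simp add: diff_divide_distrib[symmetric] norm_divide right_diff_distrib[symmetric] norm_mult)

locale sett =
  fixes \<Omega> :: "'a::euclidean_space set" and a :: "'a \<Rightarrow> real"
    and \<phi> :: "real \<Rightarrow> 'a \<Rightarrow> 'a \<Rightarrow> real" and pm pp \<beta> c1 :: real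
  assumes \<Omega>_open: "open \<Omega>"
    and a_int: "integrable lborel a"
    and a_nonneg: "\<And>z. a z \<ge> 0"
    and \<phi>_nonneg: "\<And>t x y. t \<ge> 0 \<Longrightarrow> x \<in> \<Omega> \<Longrightarrow> y \<in> \<Omega> \<Longrightarrow> \<phi> t x y \<ge> 0"
    and C1: "\<And>u. loc_integrable \<Omega> u \<Longrightarrow>
       (\<lambda>z. \<phi> (cmod (u (fst z) - u (snd z))) (fst z) (snd z)) \<in> borel_measurable (lebesgue_on (\<Omega> \<times> \<Omega>))"
    and C2: "\<And>\<epsilon>. \<epsilon> > 0 \<Longrightarrow> \<exists>\<delta>. 0 < \<delta> \<and> \<delta> < 1 \<and>
       (AE z in lebesgue_on (\<Omega> \<times> \<Omega>). \<forall>s t. s > 0 \<and> t > 0 \<and> \<bar>s - t\<bar> \<ge> \<epsilon> * max s t \<longrightarrow>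
          \<phi> ((s + t) / 2) (fst z) (snd z) \<le> (1 - \<delta>) * ((\<phi> s (fst z) (snd z) + \<phi> t (fst z) (snd z)) / 2))"
    and p_bounds: "1 < pm" "pm \<le> pp"
    and C3: "AE z in lebesgue_on (\<Omega> \<times> \<Omega>).
       almost_incr_on {0<..} \<beta> (\<lambda>t. \<phi> t (fst z) (snd z) / t powr pm) \<and>
       almost_decr_on {0<..} \<beta> (\<lambda>t. \<phi> t (fst z) (snd z) / t powr pp)"
    and C4: "AE z in lebesgue_on (\<Omega> \<times> \<Omega>).
       1 / c1 \<le> \<phi> 1 (fst z) (snd z) \<and> \<phi> 1 (fst z) (snd z) \<le> c1 \<and>
       \<phi> 0 (fst z) (snd z) = 0 \<and> (\<forall>t>0. \<phi> t (fst z) (snd z) > 0)"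
begin

lemma good: "AE z in lebesgue_on (\<Omega> \<times> \<Omega>). convex_on {0..} (\<lambda>t. \<phi> t (fst z) (snd z)) \<and> \<phi> 0 (fst z) (snd z) = 0
      \<and> (\<forall>t\<ge>0. 0 \<le> \<phi> t (fst z) (snd z))"
  by (rule phi_good[OF C2 C3 C4]) (use p_bounds in auto)

definition "P u \<longleftrightarrow> loc_Lp pm \<Omega> u"

lemma P_div: "P w \<Longrightarrow> P (\<lambda>x. w x / c)" unfolding P_def by (rule locLp_div) (use p_bounds in auto)
lemma P_cmult: "P w \<Longrightarrow> P (\<lambda>x. c * w x)" unfolding P_def by (rule locLp_cmult) (use p_bounds in auto)
lemma P_add: "P u \<Longrightarrow> P v \<Longrightarrow> P (\<lambda>x. u x + v x)" unfolding P_def by (rule locLp_add) (use p_bounds in auto)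
lemma P_zero: "P (\<lambda>x. 0)" unfolding P_def by (rule locLp_zero)
lemma P_meas: "P u \<Longrightarrow> u \<in> borel_measurable (lebesgue_on \<Omega>)" unfolding P_def by (rule locLp_meas)

lemma a_meas: "(\<lambda>z. a (fst z - snd z)) \<in> borel_measurable (lebesgue_on (\<Omega> \<times> \<Omega>))"
proof -
  have ab: "a \<in> borel_measurable borel" using borel_measurable_integrable[OF a_int] by simp
  have "(\<lambda>z::'a\<times>'a. fst z - snd z) \<in> borel_measurable (lebesgue_on (\<Omega> \<times> \<Omega>))"
    by (intro continuous_imp_measurable_on_sets_lebesgue continuous_intros open_lebesgue open_Times \<Omega>_open)
  thus ?thesis using ab by (rule measurable_compose)
qed

lemma F_meas: "P u \<Longrightarrow> (\<lambda>z. ennreal (\<phi> (cmod (u (fst z) - u (snd z))) (fst z) (snd z) * a (fst z - snd z)))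
    \<in> borel_measurable (lebesgue_on (\<Omega> \<times> \<Omega>))"
proof -
  assume "P u"
  hence "loc_integrable \<Omega> u" unfolding P_def by (rule locLp_imp_locint) (use p_bounds in auto)
  hence "(\<lambda>z. \<phi> (cmod (u (fst z) - u (snd z))) (fst z) (snd z)) \<in> borel_measurable (lebesgue_on (\<Omega> \<times> \<Omega>))"
    by (rule C1)
  hence "(\<lambda>z. \<phi> (cmod (u (fst z) - u (snd z))) (fst z) (snd z) * a (fst z - snd z)) \<in> borel_measurable (lebesgue_on (\<Omega> \<times> \<Omega>))"
    using a_meas by (rule borel_measurable_times)
  thus ?thesis by (rule measurable_compose[OF _ measurable_ennreal])
qed

lemma F_zero: "Ffun \<Omega> a \<phi> (\<lambda>x. 0) = 0"
proof -
  have "Ffun \<Omega> a \<phi> (\<lambda>x. 0) = (\<integral>\<^sup>+ z. 0 \<partial>lebesgue_on (\<Omega> \<times> \<Omega>))"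
    unfolding Ffun_def by (rule nn_integral_cong_AE) (use good in eventually_elim, simp)
  thus ?thesis by simp
qed

lemma F_convex:
  assumes U: "P U" and V: "P V" and th: "0 \<le> \<theta>" "\<theta> \<le> 1"
  shows "Ffun \<Omega> a \<phi> (\<lambda>x. complex_of_real \<theta> * U x + complex_of_real (1 - \<theta>) * V x)
      \<le> ennreal \<theta> * Ffun \<Omega> a \<phi> U + ennreal (1 - \<theta>) * Ffun \<Omega> a \<phi> V"
proof -
  let ?W = "\<lambda>x. complex_of_real \<theta> * U x + complex_of_real (1 - \<theta>) * V x"
  have "Ffun \<Omega> a \<phi> ?W \<le> (\<integral>\<^sup>+ z. ennreal \<theta> * ennreal (\<phi> (cmod (U (fst z) - U (snd z))) (fst z) (snd z) * a (fst z - snd z))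
       + ennreal (1 - \<theta>) * ennreal (\<phi> (cmod (V (fst z) - V (snd z))) (fst z) (snd z) * a (fst z - snd z)) \<partial>lebesgue_on (\<Omega> \<times> \<Omega>))"
    unfolding Ffun_def
  proof (rule nn_integral_mono_AE)
    show "AE z in lebesgue_on (\<Omega> \<times> \<Omega>). ennreal (\<phi> (cmod (?W (fst z) - ?W (snd z))) (fst z) (snd z) * a (fst z - snd z))
       \<le> ennreal \<theta> * ennreal (\<phi> (cmod (U (fst z) - U (snd z))) (fst z) (snd z) * a (fst z - snd z))
       + ennreal (1 - \<theta>) * ennreal (\<phi> (cmod (V (fst z) - V (snd z))) (fst z) (snd z) * a (fst z - snd z))"
      using good
    proof eventually_elim
      case (elim z)
      define f where "f = (\<lambda>t. \<phi> t (fst z) (snd z))"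
      have cv: "convex_on {0..} f" using elim unfolding f_def by blast
      have f0: "f 0 = 0" using elim unfolding f_def by blast
      have nn: "\<And>t. 0 \<le> t \<Longrightarrow> 0 \<le> f t" using elim unfolding f_def by blast
      define A where "A = a (fst z - snd z)"
      have A: "0 \<le> A" by (simp add: A_def a_nonneg)
      define \<alpha> where "\<alpha> = cmod (U (fst z) - U (snd z))"
      define \<gamma> where "\<gamma> = cmod (V (fst z) - V (snd z))"
      have "?W (fst z) - ?W (snd z) = complex_of_real \<theta> * (U (fst z) - U (snd z)) + complex_of_real (1 - \<theta>) * (V (fst z) - V (snd z))"
        by (simp add: algebra_simps)
      hence "cmod (?W (fst z) - ?W (snd z)) \<le> \<theta> * \<alpha> + (1 - \<theta>) * \<gamma>"
        using th unfolding \<alpha>_def \<gamma>_def by (smt (verit) norm_mult norm_of_real norm_triangle_ineq)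
      hence "f (cmod (?W (fst z) - ?W (snd z))) \<le> f (\<theta> * \<alpha> + (1 - \<theta>) * \<gamma>)"
        using th by (intro conv_mono[OF cv f0 nn]) (auto simp: \<alpha>_def \<gamma>_def)
      also have "\<dots> \<le> (1 - (1 - \<theta>)) * f \<alpha> + (1 - \<theta>) * f \<gamma>"
        using convex_onD[OF cv, of "1 - \<theta>" \<alpha> \<gamma>] th by (simp add: algebra_simps \<alpha>_def \<gamma>_def)
      finally have "f (cmod (?W (fst z) - ?W (snd z))) * A \<le> (\<theta> * f \<alpha> + (1 - \<theta>) * f \<gamma>) * A"
        using A by (intro mult_right_mono) auto
      hence "ennreal (f (cmod (?W (fst z) - ?W (snd z))) * A) \<le> ennreal (\<theta> * (f \<alpha> * A) + (1 - \<theta>) * (f \<gamma> * A))"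
        by (intro ennreal_leI) (simp add: algebra_simps)
      also have "\<dots> = ennreal \<theta> * ennreal (f \<alpha> * A) + ennreal (1 - \<theta>) * ennreal (f \<gamma> * A)"
        using th A nn[of \<alpha>] nn[of \<gamma>] by (simp add: ennreal_plus ennreal_mult \<alpha>_def \<gamma>_def)
      finally show ?case unfolding f_def A_def \<alpha>_def \<gamma>_def .
    qed
  qed
  also have "\<dots> = ennreal \<theta> * Ffun \<Omega> a \<phi> U + ennreal (1 - \<theta>) * Ffun \<Omega> a \<phi> V"
    unfolding Ffun_def using F_meas[OF U] F_meas[OF V] by (simp add: nn_integral_add nn_integral_cmult)
  finally show ?thesis .
qed

lemma F_hom: "c \<noteq> 0 \<Longrightarrow> l > 0 \<Longrightarrow> Ffun \<Omega> a \<phi> (\<lambda>x. c * w x / complex_of_real l) = Ffun \<Omega> a \<phi> (\<lambda>x. w x / complex_of_real (l / cmod c))"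
proof -
  assume c: "c \<noteq> 0" and l: "l > 0"
  have e: "cmod (c * w x / complex_of_real l - c * w y / complex_of_real l) = cmod (w x / complex_of_real (l / cmod c) - w y / complex_of_real (l / cmod c))" for x y
  proof -
    have "cmod (c * w x - c * w y) = cmod c * cmod (w x - w y)" by (metis norm_mult right_diff_distrib)
    thus ?thesis unfolding cmod_cdiv_diff cmod_div_diff using c l by (simp add: field_simps)
  qed
  show ?thesis unfolding Ffun_def by (simp only: e)
qed

lemma modp_hom: "c \<noteq> 0 \<Longrightarrow> l > 0 \<Longrightarrow> modp pm \<Omega> (\<lambda>x. c * w x / complex_of_real l) = modp pm \<Omega> (\<lambda>x. w x / complex_of_real (l / cmod c))"
  unfolding modp_def by (rule nn_integral_cong) (simp add: norm_divide norm_mult mult.commute)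

lemma G_hom: "c \<noteq> 0 \<Longrightarrow> l > 0 \<Longrightarrow> Gfun pm \<Omega> a \<phi> (\<lambda>x. c * w x / complex_of_real l) = Gfun pm \<Omega> a \<phi> (\<lambda>x. w x / complex_of_real (l / cmod c))"
  unfolding Gfun_def by (simp add: F_hom modp_hom)

lemma G_convex:
  assumes U: "P U" and V: "P V" and th: "0 \<le> \<theta>" "\<theta> \<le> 1"
  shows "Gfun pm \<Omega> a \<phi> (\<lambda>x. complex_of_real \<theta> * U x + complex_of_real (1 - \<theta>) * V x)
      \<le> ennreal \<theta> * Gfun pm \<Omega> a \<phi> U + ennreal (1 - \<theta>) * Gfun pm \<Omega> a \<phi> V"
proof -
  have "Gfun pm \<Omega> a \<phi> (\<lambda>x. complex_of_real \<theta> * U x + complex_of_real (1 - \<theta>) * V x)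
     \<le> (ennreal \<theta> * Ffun \<Omega> a \<phi> U + ennreal (1 - \<theta>) * Ffun \<Omega> a \<phi> V) + (ennreal \<theta> * modp pm \<Omega> U + ennreal (1 - \<theta>) * modp pm \<Omega> V)"
    unfolding Gfun_def
    by (rule add_mono[OF F_convex[OF U V th] modp_convex[OF P_meas[OF U] P_meas[OF V] _ th]]) (use p_bounds in auto)
  also have "\<dots> = ennreal \<theta> * Gfun pm \<Omega> a \<phi> U + ennreal (1 - \<theta>) * Gfun pm \<Omega> a \<phi> V"
    unfolding Gfun_def by (simp add: distrib_left add_ac)
  finally show ?thesis .
qed

end



lemma ratio_id: "A > 0 \<Longrightarrow> S > 0 \<Longrightarrow> complex_of_real (A/S) * (w / complex_of_real A) = w / complex_of_real S"
  by (simp add: of_real_divide field_simps)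

lemma le_add_left_ennreal: "(x::ennreal) + y \<le> 1 \<Longrightarrow> x \<le> 1"
  by (metis add_increasing2 order_refl zero_le order_trans)
lemma le_add_right_ennreal: "(x::ennreal) + y \<le> 1 \<Longrightarrow> y \<le> 1"
  by (metis add.commute le_add_left_ennreal)

context sett
begin

lemma G_zero: "Gfun pm \<Omega> a \<phi> (\<lambda>x. 0) = 0"
  unfolding Gfun_def using F_zero modp_zero[of pm \<Omega>] p_bounds by simp

lemma gauge_zero_if: "(\<And>l. l > 0 \<Longrightarrow> H (\<lambda>x. u x / complex_of_real l) \<le> 1) \<Longrightarrow> gauge H u = 0"
proof -
  assume h: "\<And>l. l > 0 \<Longrightarrow> H (\<lambda>x. u x / complex_of_real l) \<le> 1"
  have "gauge H u \<le> 0"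
  proof (rule ennreal_le_epsilon)
    fix e :: real assume e: "0 < e"
    have "gauge H u \<le> ennreal e" by (rule gauge_le[of e H u, OF e h[OF e]])
    thus "gauge H u \<le> 0 + ennreal e" by simp
  qed
  thus ?thesis by simp
qed

lemma gnorm_zero_fun: "gnorm pm \<Omega> a \<phi> (\<lambda>x. 0) = 0"
  unfolding gnorm_def by (rule gauge_zero_if) (simp add: G_zero)

lemma gnorm_hom: "gnorm pm \<Omega> a \<phi> (\<lambda>x. c * u x) = ennreal (cmod c) * gnorm pm \<Omega> a \<phi> u"
proof (cases "c = 0")
  case True then show ?thesis using gnorm_zero_fun by simp
next
  case False
  show ?thesis unfolding gnorm_def by (rule gauge_hom[OF G_hom False]) auto
qed

lemma gnorm_tri: assumes "P u" "P v" shows "gnorm pm \<Omega> a \<phi> (\<lambda>x. u x + v x) \<le> gnorm pm \<Omega> a \<phi> u + gnorm pm \<Omega> a \<phi> v"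
  unfolding gnorm_def
proof (rule gauge_tri[where P=P])
  show "\<And>w l. P w \<Longrightarrow> 0 < l \<Longrightarrow> P (\<lambda>x. w x / complex_of_real l)" by (rule P_div)
  show "\<And>U V \<theta>. P U \<Longrightarrow> P V \<Longrightarrow> 0 \<le> \<theta> \<Longrightarrow> \<theta> \<le> 1 \<Longrightarrow>
       Gfun pm \<Omega> a \<phi> (\<lambda>x. complex_of_real \<theta> * U x + complex_of_real (1 - \<theta>) * V x) \<le> ennreal \<theta> * Gfun pm \<Omega> a \<phi> U + ennreal (1 - \<theta>) * Gfun pm \<Omega> a \<phi> V"
    by (rule G_convex)
qed (use assms in auto)

lemma seminorm_tri: assumes "P u" "P v" shows "seminorm_p \<Omega> a \<phi> (\<lambda>x. u x + v x) \<le> seminorm_p \<Omega> a \<phi> u + seminorm_p \<Omega> a \<phi> v"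
  unfolding seminorm_p_def
proof (rule gauge_tri[where P=P])
  show "\<And>w l. P w \<Longrightarrow> 0 < l \<Longrightarrow> P (\<lambda>x. w x / complex_of_real l)" by (rule P_div)
  show "\<And>U V \<theta>. P U \<Longrightarrow> P V \<Longrightarrow> 0 \<le> \<theta> \<Longrightarrow> \<theta> \<le> 1 \<Longrightarrow>
       Ffun \<Omega> a \<phi> (\<lambda>x. complex_of_real \<theta> * U x + complex_of_real (1 - \<theta>) * V x) \<le> ennreal \<theta> * Ffun \<Omega> a \<phi> U + ennreal (1 - \<theta>) * Ffun \<Omega> a \<phi> V"
    by (rule F_convex)
qed (use assms in auto)

lemma seminorm_hom: "c \<noteq> 0 \<Longrightarrow> seminorm_p \<Omega> a \<phi> (\<lambda>x. c * u x) = ennreal (cmod c) * seminorm_p \<Omega> a \<phi> u"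
  unfolding seminorm_p_def by (rule gauge_hom[OF F_hom]) auto

lemma modp_div_scale:
  assumes um: "u \<in> borel_measurable (lebesgue_on \<Omega>)" and l: "l > 0"
  shows "modp pm \<Omega> u = ennreal (l powr pm) * modp pm \<Omega> (\<lambda>x. u x / complex_of_real l)"
proof -
  have "modp pm \<Omega> (\<lambda>x. complex_of_real l * (u x / complex_of_real l)) = ennreal (cmod (complex_of_real l) powr pm) * modp pm \<Omega> (\<lambda>x. u x / complex_of_real l)"
    by (rule modp_cmult) (use um p_bounds in auto)
  moreover have "(\<lambda>x. complex_of_real l * (u x / complex_of_real l)) = u" using l by auto
  ultimately show ?thesis using l by simp
qed


lemma Lp_le:
  assumes um: "u \<in> borel_measurable (lebesgue_on \<Omega>)" and l: "l > 0" and m: "modp pm \<Omega> (\<lambda>x. u x / complex_of_real l) \<le> 1"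
  shows "Lp_norm pm \<Omega> u \<le> ennreal l"
proof -
  have "modp pm \<Omega> u = ennreal (l powr pm) * modp pm \<Omega> (\<lambda>x. u x / complex_of_real l)"
    by (rule modp_div_scale[OF um l])
  also have "\<dots> \<le> ennreal (l powr pm) * 1" by (intro mult_left_mono m) auto
  finally have mu: "modp pm \<Omega> u \<le> ennreal (l powr pm)" by simp
  hence fin: "modp pm \<Omega> u \<noteq> \<infinity>" by (auto simp: top_unique)
  have "enn2real (modp pm \<Omega> u) \<le> enn2real (ennreal (l powr pm))" by (rule enn2real_mono[OF mu]) simp
  hence "enn2real (modp pm \<Omega> u) \<le> l powr pm" by simp
  hence "enn2real (modp pm \<Omega> u) powr (1/pm) \<le> (l powr pm) powr (1/pm)"
    by (intro powr_mono2) (use p_bounds in auto)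
  also have "\<dots> = l" using l p_bounds by (simp add: powr_powr)
  finally show ?thesis unfolding Lp_norm_def using fin by (simp add: ennreal_leI)
qed

lemma gnorm_eq0_if_ae:
  assumes ae: "AE x in lebesgue_on \<Omega>. u x = 0"
  shows "gnorm pm \<Omega> a \<phi> u = 0"
  unfolding gnorm_def
proof (rule gauge_zero_if)
  fix l :: real assume l: "l > 0"
  have "Ffun \<Omega> a \<phi> (\<lambda>x. u x / complex_of_real l) = (\<integral>\<^sup>+ z. 0 \<partial>lebesgue_on (\<Omega> \<times> \<Omega>))"
    unfolding Ffun_def
  proof (rule nn_integral_cong_AE)
    show "AE z in lebesgue_on (\<Omega> \<times> \<Omega>). ennreal (\<phi> (cmod (u (fst z) / complex_of_real l - u (snd z) / complex_of_real l)) (fst z) (snd z) * a (fst z - snd z)) = 0"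
      using ae_prod[OF \<Omega>_open ae] good
    proof eventually_elim
      case (elim z)
      hence "u (fst z) = 0" "u (snd z) = 0" "\<phi> 0 (fst z) (snd z) = 0" by blast+
      thus ?case by simp
    qed
  qed
  moreover have "modp pm \<Omega> (\<lambda>x. u x / complex_of_real l) = (\<integral>\<^sup>+ x. 0 \<partial>lebesgue_on \<Omega>)"
    unfolding modp_def
  proof (rule nn_integral_cong_AE)
    show "AE x in lebesgue_on \<Omega>. ennreal (cmod (u x / complex_of_real l) powr pm) = 0"
      using ae by eventually_elim simp
  qed
  ultimately show "Gfun pm \<Omega> a \<phi> (\<lambda>x. u x / complex_of_real l) \<le> 1" unfolding Gfun_def by simp
qed

lemma gnorm_eq0_imp_ae:
  assumes Pu: "P u" and g0: "gnorm pm \<Omega> a \<phi> u = 0"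
  shows "AE x in lebesgue_on \<Omega>. u x = 0"
proof -
  have um: "u \<in> borel_measurable (lebesgue_on \<Omega>)" by (rule P_meas[OF Pu])
  have "modp pm \<Omega> u \<le> 0"
  proof (rule ennreal_le_epsilon)
    fix e :: real assume e: "0 < e"
    have "gauge (Gfun pm \<Omega> a \<phi>) u < ennreal (min 1 e)" using g0 e by (simp add: gnorm_def)
    then obtain l where l: "l > 0" "l < min 1 e" "Gfun pm \<Omega> a \<phi> (\<lambda>x. u x / complex_of_real l) \<le> 1"
      using gauge_lt by blast
    have m1: "modp pm \<Omega> (\<lambda>x. u x / complex_of_real l) \<le> 1" using l(3) unfolding Gfun_def by (rule le_add_right_ennreal)
    have "modp pm \<Omega> u = ennreal (l powr pm) * modp pm \<Omega> (\<lambda>x. u x / complex_of_real l)"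
      by (rule modp_div_scale[OF um l(1)])
    also have "\<dots> \<le> ennreal (l powr pm) * 1" by (intro mult_left_mono m1) auto
    also have "l powr pm \<le> l" using l p_bounds by (intro powr_le_one_le) auto
    hence "ennreal (l powr pm) * 1 \<le> ennreal e" using l by (simp add: ennreal_leI)
    finally show "modp pm \<Omega> u \<le> 0 + ennreal e" by simp
  qed
  hence "modp pm \<Omega> u = 0" by simp
  hence "AE x in lebesgue_on \<Omega>. ennreal (cmod (u x) powr pm) = 0"
    unfolding modp_def by (subst (asm) nn_integral_0_iff_AE) (use um in auto)
  thus ?thesis
  proof (rule eventually_mono)
    fix x assume "ennreal (cmod (u x) powr pm) = 0"
    hence "cmod (u x) powr pm \<le> 0" by (simp only: ennreal_eq_0_iff)
    hence "cmod (u x) powr pm = 0" using powr_ge_zero by (metis order.antisym)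
    thus "u x = 0" by simp
  qed
qed


lemma lower_bound:
  assumes Pu: "P u"
  shows "fnorm pm \<Omega> a \<phi> u / 2 \<le> gnorm pm \<Omega> a \<phi> u"
  unfolding gnorm_def
proof (rule gauge_ge)
  fix l :: real assume l: "0 < l" "Gfun pm \<Omega> a \<phi> (\<lambda>x. u x / complex_of_real l) \<le> 1"
  have "Ffun \<Omega> a \<phi> (\<lambda>x. u x / complex_of_real l) \<le> 1" using l(2) unfolding Gfun_def by (rule le_add_left_ennreal)
  hence s: "seminorm_p \<Omega> a \<phi> u \<le> ennreal l" unfolding seminorm_p_def by (rule gauge_le[OF l(1)])
  have "modp pm \<Omega> (\<lambda>x. u x / complex_of_real l) \<le> 1" using l(2) unfolding Gfun_def by (rule le_add_right_ennreal)
  hence L: "Lp_norm pm \<Omega> u \<le> ennreal l" by (rule Lp_le[OF P_meas[OF Pu] l(1)])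
  have "fnorm pm \<Omega> a \<phi> u \<le> ennreal l + ennreal l" unfolding fnorm_def by (rule add_mono[OF s L])
  also have "\<dots> = ennreal (2 * l)" using l by (simp flip: ennreal_plus)
  finally have "fnorm pm \<Omega> a \<phi> u / 2 \<le> ennreal (2 * l) / ennreal 2" by (simp add: divide_right_mono_ennreal)
  also have "\<dots> = ennreal l" using divide_ennreal[of "2*l" 2] l by simp
  finally show "fnorm pm \<Omega> a \<phi> u / 2 \<le> ennreal l" .
qed

lemma upper_bound:
  assumes Pu: "P u" and fin: "fnorm pm \<Omega> a \<phi> u < \<infinity>"
  shows "gnorm pm \<Omega> a \<phi> u \<le> fnorm pm \<Omega> a \<phi> u"
proof (rule ennreal_le_epsilon)
  fix e :: real assume e: "0 < e"
  have sfin: "seminorm_p \<Omega> a \<phi> u < \<infinity>" and Lfin: "Lp_norm pm \<Omega> u < \<infinity>"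
    using fin unfolding fnorm_def by auto
  obtain s0 where s0: "seminorm_p \<Omega> a \<phi> u = ennreal s0" "0 \<le> s0"
    using sfin by (cases "seminorm_p \<Omega> a \<phi> u" rule: ennreal_cases) auto
  have mfin: "modp pm \<Omega> u \<noteq> \<infinity>" using Lfin unfolding Lp_norm_def by (auto split: if_splits)
  define m0 where "m0 = enn2real (modp pm \<Omega> u)"
  have m0: "modp pm \<Omega> u = ennreal m0" "0 \<le> m0" using mfin unfolding m0_def
    by (cases "modp pm \<Omega> u" rule: ennreal_cases; simp)+
  define b0 where "b0 = m0 powr (1/pm)"
  have b0: "0 \<le> b0" by (simp add: b0_def)
  have Lb: "Lp_norm pm \<Omega> u = ennreal b0" unfolding Lp_norm_def b0_def m0_def using mfin by simp
  have "seminorm_p \<Omega> a \<phi> u < ennreal (s0 + e/2)" using s0 e by (simp add: ennreal_less_iff)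
  then obtain A where A: "A > 0" "A < s0 + e/2" "Ffun \<Omega> a \<phi> (\<lambda>x. u x / complex_of_real A) \<le> 1"
    unfolding seminorm_p_def using gauge_lt by blast
  define B where "B = b0 + e/2"
  have B: "B > 0" "b0 < B" using b0 e by (auto simp: B_def)
  have mB: "modp pm \<Omega> (\<lambda>x. u x / complex_of_real B) \<le> 1"
  proof -
    have eqf: "(\<lambda>x. u x / complex_of_real B) = (\<lambda>x. complex_of_real (1/B) * u x)"
      by (auto simp: divide_inverse mult.commute of_real_inverse)
    have "modp pm \<Omega> (\<lambda>x. complex_of_real (1/B) * u x) = ennreal (cmod (complex_of_real (1/B)) powr pm) * modp pm \<Omega> u"
      by (rule modp_cmult[OF P_meas[OF Pu]]) (use p_bounds in auto)
    also have "\<dots> = ennreal ((1/B) powr pm * m0)" using B m0 by (simp add: ennreal_mult norm_divide)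
    also have "(1/B) powr pm * m0 \<le> 1"
    proof -
      have "m0 = b0 powr pm" using m0(2) p_bounds by (simp add: b0_def powr_powr)
      also have "\<dots> \<le> B powr pm" using b0 B p_bounds by (intro powr_mono2) auto
      finally have "m0 \<le> B powr pm" .
      moreover have "(1/B) powr pm = 1 / B powr pm" using B by (simp add: powr_divide)
      ultimately show ?thesis using B by (simp add: divide_le_eq_1)
    qed
    hence "ennreal ((1/B) powr pm * m0) \<le> 1" by (simp add: ennreal_le_1)
    finally show ?thesis unfolding eqf .
  qed
  define S where "S = A + B"
  have S: "S > 0" using A B by (simp add: S_def)
  define \<theta> where "\<theta> = A / S"
  have th: "0 \<le> \<theta>" "\<theta> \<le> 1" using A B by (auto simp: \<theta>_def S_def)
  have th1: "1 - \<theta> = B / S" using S by (simp add: \<theta>_def S_def field_simps)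
  have eq1: "(\<lambda>x. u x / complex_of_real S) = (\<lambda>x. complex_of_real \<theta> * (u x / complex_of_real A) + complex_of_real (1 - \<theta>) * 0)"
    using ratio_id[OF A(1) S] by (simp add: \<theta>_def)
  have eq2: "(\<lambda>x. u x / complex_of_real S) = (\<lambda>x. complex_of_real \<theta> * 0 + complex_of_real (1 - \<theta>) * (u x / complex_of_real B))"
    using ratio_id[OF B(1) S] by (simp add: th1)
  have "Ffun \<Omega> a \<phi> (\<lambda>x. u x / complex_of_real S) \<le> ennreal \<theta> * Ffun \<Omega> a \<phi> (\<lambda>x. u x / complex_of_real A) + ennreal (1 - \<theta>) * Ffun \<Omega> a \<phi> (\<lambda>x. 0)"
    unfolding eq1 by (rule F_convex[OF P_div[OF Pu] P_zero th])
  also have "\<dots> = ennreal \<theta> * Ffun \<Omega> a \<phi> (\<lambda>x. u x / complex_of_real A)" by (simp add: F_zero)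
  also have "\<dots> \<le> ennreal \<theta> * 1" using A(3) by (rule mult_left_mono) simp
  finally have F1: "Ffun \<Omega> a \<phi> (\<lambda>x. u x / complex_of_real S) \<le> ennreal \<theta>" by simp
  have "modp pm \<Omega> (\<lambda>x. u x / complex_of_real S) \<le> ennreal \<theta> * modp pm \<Omega> (\<lambda>x. 0) + ennreal (1 - \<theta>) * modp pm \<Omega> (\<lambda>x. u x / complex_of_real B)"
    unfolding eq2 by (rule modp_convex[OF _ P_meas[OF P_div[OF Pu]] _ th]) (use p_bounds in auto)
  also have "\<dots> = ennreal (1 - \<theta>) * modp pm \<Omega> (\<lambda>x. u x / complex_of_real B)" using p_bounds by (simp add: modp_zero)
  also have "\<dots> \<le> ennreal (1 - \<theta>) * 1" using mB by (rule mult_left_mono) simp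
  finally have M1: "modp pm \<Omega> (\<lambda>x. u x / complex_of_real S) \<le> ennreal (1 - \<theta>)" by simp
  have "Gfun pm \<Omega> a \<phi> (\<lambda>x. u x / complex_of_real S) \<le> ennreal \<theta> + ennreal (1 - \<theta>)"
    unfolding Gfun_def by (rule add_mono[OF F1 M1])
  also have "\<dots> = 1" using th by (simp flip: ennreal_plus)
  finally have "gnorm pm \<Omega> a \<phi> u \<le> ennreal S" unfolding gnorm_def by (rule gauge_le[OF S])
  also have "\<dots> \<le> ennreal (s0 + b0 + e)" using A B by (intro ennreal_leI) (simp add: S_def B_def)
  also have "\<dots> = fnorm pm \<Omega> a \<phi> u + ennreal e" unfolding fnorm_def s0 Lb using s0 b0 e by (simp flip: ennreal_plus)
  finally show "gnorm pm \<Omega> a \<phi> u \<le> fnorm pm \<Omega> a \<phi> u + ennreal e" .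
qed

end



context sett
begin

lemma F_zero_gauge: "seminorm_p \<Omega> a \<phi> (\<lambda>x. 0) = 0"
  unfolding seminorm_p_def by (rule gauge_zero_if) (simp add: F_zero)

lemma fnorm_zero: "fnorm pm \<Omega> a \<phi> (\<lambda>x. 0) = 0"
  unfolding fnorm_def Lp_norm_def using F_zero_gauge modp_zero[of pm \<Omega>] p_bounds by simp

lemma modp_fin: "fnorm pm \<Omega> a \<phi> u < \<infinity> \<Longrightarrow> modp pm \<Omega> u < \<infinity>"
  unfolding fnorm_def Lp_norm_def by (auto split: if_splits simp: less_top)

lemma Lp_fin: "modp pm \<Omega> u < \<infinity> \<Longrightarrow> Lp_norm pm \<Omega> u < \<infinity>"
  unfolding Lp_norm_def by simp

lemma Lspace_iff: "u \<in> Lspace pm \<Omega> a \<phi> \<longleftrightarrow> P u \<and> fnorm pm \<Omega> a \<phi> u < \<infinity>"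
  by (simp add: Lspace_def P_def)

lemma Lspace_add:
  assumes u: "u \<in> Lspace pm \<Omega> a \<phi>" and v: "v \<in> Lspace pm \<Omega> a \<phi>"
  shows "(\<lambda>x. u x + v x) \<in> Lspace pm \<Omega> a \<phi>"
proof -
  have Pu: "P u" and Pv: "P v" and fu: "fnorm pm \<Omega> a \<phi> u < \<infinity>" and fv: "fnorm pm \<Omega> a \<phi> v < \<infinity>"
    using u v by (auto simp: Lspace_iff)
  have s: "seminorm_p \<Omega> a \<phi> (\<lambda>x. u x + v x) < \<infinity>"
  proof -
    have "seminorm_p \<Omega> a \<phi> (\<lambda>x. u x + v x) \<le> seminorm_p \<Omega> a \<phi> u + seminorm_p \<Omega> a \<phi> v"
      by (rule seminorm_tri[OF Pu Pv])
    also have "\<dots> < \<infinity>" using fu fv unfolding fnorm_def by auto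
    finally show ?thesis .
  qed
  have m: "modp pm \<Omega> (\<lambda>x. u x + v x) < \<infinity>"
  proof -
    have eqf: "(\<lambda>x. u x + v x) = (\<lambda>x. 2 * (complex_of_real (1/2) * u x + complex_of_real (1 - 1/2) * v x))"
      by (auto simp: algebra_simps)
    have "modp pm \<Omega> (\<lambda>x. 2 * (complex_of_real (1/2) * u x + complex_of_real (1 - 1/2) * v x))
        = ennreal (cmod (2::complex) powr pm) * modp pm \<Omega> (\<lambda>x. complex_of_real (1/2) * u x + complex_of_real (1 - 1/2) * v x)"
      by (rule modp_cmult) (use P_meas[OF Pu] P_meas[OF Pv] p_bounds in auto)
    also have "\<dots> \<le> ennreal (cmod (2::complex) powr pm) * (ennreal (1/2) * modp pm \<Omega> u + ennreal (1 - 1/2) * modp pm \<Omega> v)"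
      by (intro mult_left_mono modp_convex[OF P_meas[OF Pu] P_meas[OF Pv]]) (use p_bounds in auto)
    also have "\<dots> < \<infinity>" using modp_fin[OF fu] modp_fin[OF fv] by (simp add: less_top[symmetric] ennreal_mult_eq_top_iff)
    finally show ?thesis unfolding eqf .
  qed
  show ?thesis unfolding Lspace_iff fnorm_def using P_add[OF Pu Pv] s Lp_fin[OF m] by simp
qed

lemma Lspace_cmult:
  assumes u: "u \<in> Lspace pm \<Omega> a \<phi>"
  shows "(\<lambda>x. c * u x) \<in> Lspace pm \<Omega> a \<phi>"
proof -
  have Pu: "P u" and fu: "fnorm pm \<Omega> a \<phi> u < \<infinity>" using u by (auto simp: Lspace_iff)
  show ?thesis
  proof (cases "c = 0")
    case True
    thus ?thesis using fnorm_zero P_zero by (simp add: Lspace_iff)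
  next
    case False
    have s: "seminorm_p \<Omega> a \<phi> (\<lambda>x. c * u x) < \<infinity>"
      using seminorm_hom[OF False, of u] fu unfolding fnorm_def by (simp add: ennreal_mult_less_top)
    have m: "modp pm \<Omega> (\<lambda>x. c * u x) < \<infinity>"
      using modp_cmult[OF P_meas[OF Pu], of pm c] modp_fin[OF fu] p_bounds by (simp add: ennreal_mult_less_top)
    show ?thesis unfolding Lspace_iff fnorm_def using P_cmult[OF Pu] s Lp_fin[OF m] by simp
  qed
qed

end

theorem theorem2p2:
  fixes \<Omega> :: "'a::euclidean_space set"
    and a :: "'a \<Rightarrow> real"
    and \<phi> :: "real \<Rightarrow> 'a \<Rightarrow> 'a \<Rightarrow> real"
    and r0 c0 pm pp \<beta> c1 :: real
  assumes \<Omega>_open: "open \<Omega>"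
    and a_int: "integrable lborel a"
    and a_nonneg: "\<And>z. a z \<ge> 0"
    and r0_pos: "r0 > 0" and c0_pos: "c0 > 0"
    and a_ball: "AE z in lebesgue_on (ball 0 r0). a z \<ge> c0"
    and components_close: "\<not> connected \<Omega> \<Longrightarrow>
       (\<exists>C :: nat \<Rightarrow> 'a set. \<exists>N :: enat.
          bij_betw C {i. enat i < N} (components \<Omega>) \<and>
          (\<forall>i. enat (Suc i) < N \<longrightarrow> setdist (C i) (C (Suc i)) < 2 * r0))"
    and \<phi>_nonneg: "\<And>t x y. t \<ge> 0 \<Longrightarrow> x \<in> \<Omega> \<Longrightarrow> y \<in> \<Omega> \<Longrightarrow> \<phi> t x y \<ge> 0"
    and C1: "\<And>u. loc_integrable \<Omega> u \<Longrightarrow>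
       (\<lambda>z. \<phi> (cmod (u (fst z) - u (snd z))) (fst z) (snd z)) \<in> borel_measurable (lebesgue_on (\<Omega> \<times> \<Omega>))"
    and C2: "\<And>\<epsilon>. \<epsilon> > 0 \<Longrightarrow> \<exists>\<delta>. 0 < \<delta> \<and> \<delta> < 1 \<and>
       (AE z in lebesgue_on (\<Omega> \<times> \<Omega>). \<forall>s t. s > 0 \<and> t > 0 \<and> \<bar>s - t\<bar> \<ge> \<epsilon> * max s t \<longrightarrow>
          \<phi> ((s + t) / 2) (fst z) (snd z) \<le> (1 - \<delta>) * ((\<phi> s (fst z) (snd z) + \<phi> t (fst z) (snd z)) / 2))"
    and p_bounds: "1 < pm" "pm \<le> pp" and \<beta>_ge: "\<beta> \<ge> 1"
    and C3: "AE z in lebesgue_on (\<Omega> \<times> \<Omega>).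
       almost_incr_on {0<..} \<beta> (\<lambda>t. \<phi> t (fst z) (snd z) / t powr pm) \<and>
       almost_decr_on {0<..} \<beta> (\<lambda>t. \<phi> t (fst z) (snd z) / t powr pp)"
    and c1_pos: "c1 > 0"
    and C4: "AE z in lebesgue_on (\<Omega> \<times> \<Omega>).
       1 / c1 \<le> \<phi> 1 (fst z) (snd z) \<and> \<phi> 1 (fst z) (snd z) \<le> c1 \<and>
       \<phi> 0 (fst z) (snd z) = 0 \<and> (\<forall>t>0. \<phi> t (fst z) (snd z) > 0)"
  shows
    "(\<forall>u\<in>Lspace pm \<Omega> a \<phi>. \<forall>v\<in>Lspace pm \<Omega> a \<phi>. \<forall>c::complex.
        (\<lambda>x. u x + v x) \<in> Lspace pm \<Omega> a \<phi> \<and> (\<lambda>x. c * u x) \<in> Lspace pm \<Omega> a \<phi>)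
     \<and> (\<forall>u\<in>Lspace pm \<Omega> a \<phi>. gnorm pm \<Omega> a \<phi> u < \<infinity>)
     \<and> (\<forall>u\<in>Lspace pm \<Omega> a \<phi>.
          gnorm pm \<Omega> a \<phi> u = 0 \<longleftrightarrow> (AE x in lebesgue_on \<Omega>. u x = 0))
     \<and> (\<forall>u\<in>Lspace pm \<Omega> a \<phi>. \<forall>c::complex.
          gnorm pm \<Omega> a \<phi> (\<lambda>x. c * u x) = ennreal (cmod c) * gnorm pm \<Omega> a \<phi> u)
     \<and> (\<forall>u\<in>Lspace pm \<Omega> a \<phi>. \<forall>v\<in>Lspace pm \<Omega> a \<phi>.
          gnorm pm \<Omega> a \<phi> (\<lambda>x. u x + v x) \<le> gnorm pm \<Omega> a \<phi> u + gnorm pm \<Omega> a \<phi> v)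
     \<and> (\<forall>u\<in>Lspace pm \<Omega> a \<phi>.
          fnorm pm \<Omega> a \<phi> u / 2 \<le> gnorm pm \<Omega> a \<phi> u \<and>
          gnorm pm \<Omega> a \<phi> u \<le> ennreal (\<beta> powr (1 / pm)) * fnorm pm \<Omega> a \<phi> u)"
proof -
  interpret sett \<Omega> a \<phi> pm pp \<beta> c1
    by (rule sett.intro) (use assms in auto)
  have b1: "1 \<le> \<beta> powr (1 / pm)" using \<beta>_ge p_bounds by (intro ge_one_powr_ge_zero) auto
  show ?thesis
  proof (intro conjI ballI allI)
    fix u v c assume "u \<in> Lspace pm \<Omega> a \<phi>" "v \<in> Lspace pm \<Omega> a \<phi>"
    thus "(\<lambda>x. u x + v x) \<in> Lspace pm \<Omega> a \<phi>" by (rule Lspace_add)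
  next
    fix u v c assume "u \<in> Lspace pm \<Omega> a \<phi>"
    thus "(\<lambda>x. c * u x) \<in> Lspace pm \<Omega> a \<phi>" by (rule Lspace_cmult)
  next
    fix u assume u: "u \<in> Lspace pm \<Omega> a \<phi>"
    hence "gnorm pm \<Omega> a \<phi> u \<le> fnorm pm \<Omega> a \<phi> u" by (intro upper_bound) (auto simp: Lspace_iff)
    also have "\<dots> < \<infinity>" using u by (simp add: Lspace_iff)
    finally show "gnorm pm \<Omega> a \<phi> u < \<infinity>" .
  next
    fix u assume u: "u \<in> Lspace pm \<Omega> a \<phi>"
    show "gnorm pm \<Omega> a \<phi> u = 0 \<longleftrightarrow> (AE x in lebesgue_on \<Omega>. u x = 0)"
      using gnorm_eq0_if_ae gnorm_eq0_imp_ae u by (auto simp: Lspace_iff)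
  next
    fix u c show "gnorm pm \<Omega> a \<phi> (\<lambda>x. c * u x) = ennreal (cmod c) * gnorm pm \<Omega> a \<phi> u" by (rule gnorm_hom)
  next
    fix u v assume "u \<in> Lspace pm \<Omega> a \<phi>" "v \<in> Lspace pm \<Omega> a \<phi>"
    thus "gnorm pm \<Omega> a \<phi> (\<lambda>x. u x + v x) \<le> gnorm pm \<Omega> a \<phi> u + gnorm pm \<Omega> a \<phi> v"
      by (intro gnorm_tri) (auto simp: Lspace_iff)
  next
    fix u assume "u \<in> Lspace pm \<Omega> a \<phi>"
    thus "fnorm pm \<Omega> a \<phi> u / 2 \<le> gnorm pm \<Omega> a \<phi> u" by (intro lower_bound) (auto simp: Lspace_iff)
  next
    fix u assume u: "u \<in> Lspace pm \<Omega> a \<phi>"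
    hence "gnorm pm \<Omega> a \<phi> u \<le> fnorm pm \<Omega> a \<phi> u" by (intro upper_bound) (auto simp: Lspace_iff)
    also have "\<dots> = 1 * fnorm pm \<Omega> a \<phi> u" by simp
    also have "\<dots> \<le> ennreal (\<beta> powr (1 / pm)) * fnorm pm \<Omega> a \<phi> u"
      by (intro mult_right_mono) (use b1 in \<open>auto simp: ennreal_1[symmetric] simp del: ennreal_1 intro!: ennreal_leI\<close>)
    finally show "gnorm pm \<Omega> a \<phi> u \<le> ennreal (\<beta> powr (1 / pm)) * fnorm pm \<Omega> a \<phi> u" .
  qed
qed


end
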